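(* For each real $x \geq 1$, let $m(x)$ be the greatest positive integer $m$ such that $\varphi(m) \leq x$. Then \[ m(x) \sim e^{\gamma}\, x \log\log x \quad \text{as } x \to +\infty, \] i.e., $m(x)/(x\log\log x) \to e^{\gamma}$.
   Context: $\varphi$ denotes Euler's totient function and $\gamma$ is the Euler--Mascheroni constant. $\log$ is the natural logarithm. *)

theory Defs
  imports "HOL-Analysis.Analysis" "HOL-Number_Theory.Number_Theory"
begin

definition max_totient_preimage :: "real \<Rightarrow> nat" where
  "max_totient_preimage x = (GREATEST m. m > 0 \<and> real (totient m) \<le> x)"

end

theory Submission
  imports Defs "HOL-Real_Asymp.Real_Asymp"
begin


lemma power_powr: "(0::real) < x \<Longrightarrow> (x ^ k) powr a = (x powr a) ^ k"
  by (induction k) (auto simp: powr_mult)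

lemma pw1:
  assumes n: "n \<ge> 2" and s: "\<sigma> > 0"
  shows "\<sigma> * real n powr (-(1+\<sigma>)) \<le> real (n-1) powr (-\<sigma>) - real n powr (-\<sigma>)"
proof -
  have n2: "real n \<ge> 2" using n by simp
  have e: "real (n-1) = real n * (1 - 1 / real n)" using n2 n by (simp add: field_simps of_nat_diff)
  have l: "ln (1 - 1 / real n) \<le> - (1 / real n)" using n2 by (intro ln_one_minus_pos_upper_bound) auto
  have "(1 - 1 / real n) powr (-\<sigma>) = exp (-\<sigma> * ln (1 - 1 / real n))"
    using n2 by (simp add: powr_def)
  also have "\<dots> \<ge> 1 + (-\<sigma> * ln (1 - 1 / real n))" by (rule exp_ge_add_one_self)
  finally have "(1 - 1 / real n) powr (-\<sigma>) \<ge> 1 + \<sigma> / real n"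
    using l s mult_left_mono[OF l, of \<sigma>] by (simp add: divide_inverse)
  then have "real n powr (-\<sigma>) * (1 - 1 / real n) powr (-\<sigma>) \<ge> real n powr (-\<sigma>) * (1 + \<sigma> / real n)"
    by (intro mult_left_mono) auto
  moreover have "real (n-1) powr (-\<sigma>) = real n powr (-\<sigma>) * (1 - 1 / real n) powr (-\<sigma>)"
    unfolding e using n2 by (auto intro: powr_mult)
  ultimately have "real (n-1) powr (-\<sigma>) - real n powr (-\<sigma>) \<ge> real n powr (-\<sigma>) * (\<sigma> / real n)"
    by (simp add: algebra_simps)
  moreover have "real n powr (-\<sigma>) * (\<sigma> / real n) = \<sigma> * real n powr (-(1+\<sigma>))"
  proof -
    have a: "real n powr (-(1+\<sigma>)) = real n powr (-\<sigma>) * real n powr (-1)"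
    proof -
      have "-(1+\<sigma>) = -\<sigma> + (-1)" by simp
      then show ?thesis by (simp only: powr_add)
    qed
    have b: "real n powr (-1) = 1 / real n" using n2 by (simp add: powr_neg_one)
    show ?thesis unfolding a b by simp
  qed
  ultimately show ?thesis by simp
qed

lemma pw2:
  assumes n: "n \<ge> 1" and s: "\<sigma> > 0"
  shows "real n powr (-\<sigma>) - real (Suc n) powr (-\<sigma>) \<le> \<sigma> * real n powr (-(1+\<sigma>))"
proof -
  have n1: "real n \<ge> 1" using n by simp
  have e: "real (Suc n) = real n * (1 + 1 / real n)" using n1 by (simp add: distrib_left)
  have l: "ln (1 + 1 / real n) \<le> 1 / real n" using n1 by (intro ln_add_one_self_le_self) auto
  have pos: "0 < 1 + 1 / real n" using n1 by (intro add_pos_nonneg) auto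
  have "(1 + 1 / real n) powr (-\<sigma>) = exp (-\<sigma> * ln (1 + 1 / real n))"
    using pos by (simp add: powr_def)
  also have "\<dots> \<ge> 1 + (-\<sigma> * ln (1 + 1 / real n))" by (rule exp_ge_add_one_self)
  finally have f1: "(1 + 1 / real n) powr (-\<sigma>) \<ge> 1 + (-\<sigma> * ln (1 + 1 / real n))" .
  have m: "\<sigma> * ln (1 + 1 / real n) \<le> \<sigma> * (1 / real n)" using l s by (intro mult_left_mono) auto
  have "\<sigma> / real n = \<sigma> * (1 / real n)" by simp
  then have "(1 + 1 / real n) powr (-\<sigma>) \<ge> 1 - \<sigma> / real n" using f1 m by linarith
  then have "real n powr (-\<sigma>) * (1 + 1 / real n) powr (-\<sigma>) \<ge> real n powr (-\<sigma>) * (1 - \<sigma> / real n)"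
    by (intro mult_left_mono) auto
  moreover have "real (Suc n) powr (-\<sigma>) = real n powr (-\<sigma>) * (1 + 1 / real n) powr (-\<sigma>)"
    unfolding e using n1 by (auto intro: powr_mult)
  ultimately have "real n powr (-\<sigma>) - real (Suc n) powr (-\<sigma>) \<le> real n powr (-\<sigma>) * (\<sigma> / real n)"
    by (simp add: algebra_simps)
  moreover have "real n powr (-\<sigma>) * (\<sigma> / real n) = \<sigma> * real n powr (-(1+\<sigma>))"
  proof -
    have a: "real n powr (-(1+\<sigma>)) = real n powr (-\<sigma>) * real n powr (-1)"
    proof -
      have "-(1+\<sigma>) = -\<sigma> + (-1)" by simp
      then show ?thesis by (simp only: powr_add)
    qed
    have b: "real n powr (-1) = 1 / real n" using n1 by (simp add: powr_neg_one)
    show ?thesis unfolding a b by simp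
  qed
  ultimately show ?thesis by simp
qed

lemma zeta_upper:
  assumes s: "\<sigma> > 0"
  shows "(\<Sum>n\<in>{1..M}. real n powr (-(1+\<sigma>))) \<le> 1 + 1 / \<sigma>"
proof (cases "M \<ge> 1")
  case False then show ?thesis using s by simp
next
  case True
  have "{1..M} = insert 1 {Suc 1..M}" using True by auto
  then have "(\<Sum>n\<in>{1..M}. real n powr (-(1+\<sigma>))) = 1 + (\<Sum>n\<in>{Suc 1..M}. real n powr (-(1+\<sigma>)))"
    by simp
  also have "(\<Sum>n\<in>{Suc 1..M}. real n powr (-(1+\<sigma>))) \<le> (\<Sum>n\<in>{Suc 1..M}. (real (n-1) powr (-\<sigma>) - real n powr (-\<sigma>)) / \<sigma>)"
  proof (intro sum_mono)
    fix n assume "n \<in> {Suc 1..M}"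
    then have "real n powr (-(1+\<sigma>)) * \<sigma> \<le> real (n-1) powr (-\<sigma>) - real n powr (-\<sigma>)"
      using pw1[of n \<sigma>] s by (simp only: mult.commute) auto
    then show "real n powr (-(1+\<sigma>)) \<le> (real (n-1) powr (-\<sigma>) - real n powr (-\<sigma>)) / \<sigma>"
      by (rule pos_le_divide_eq[OF s, THEN iffD2])
  qed
  also have "\<dots> = (\<Sum>n\<in>{Suc 1..M}. real (n-1) powr (-\<sigma>) - real n powr (-\<sigma>)) / \<sigma>"
    by (simp add: sum_divide_distrib)
  also have "(\<Sum>n\<in>{Suc 1..M}. real (n-1) powr (-\<sigma>) - real n powr (-\<sigma>)) = 1 - real M powr (-\<sigma>)"
  proof -
    define f where "f k = - (real k powr (-\<sigma>))" for k
    have "(\<Sum>n\<in>{Suc 1..M}. f n - f (n-1)) = f M - f 1"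
      using True by (intro sum_telescope'')
    then show ?thesis unfolding f_def by simp
  qed
  also have "(1 - real M powr (-\<sigma>)) / \<sigma> \<le> 1 / \<sigma>" using s by (intro divide_right_mono) auto
  finally show ?thesis by simp
qed

lemma zeta_lower:
  assumes s: "\<sigma> > 0"
  shows "(\<Sum>n\<in>{1..N}. real n powr (-(1+\<sigma>))) \<ge> (1 - real (Suc N) powr (-\<sigma>)) / \<sigma>"
proof -
  have "(\<Sum>n\<in>{1..N}. real n powr (-\<sigma>) - real (Suc n) powr (-\<sigma>)) / \<sigma> = (\<Sum>n\<in>{1..N}. (real n powr (-\<sigma>) - real (Suc n) powr (-\<sigma>)) / \<sigma>)"
    by (simp add: sum_divide_distrib)
  also have "\<dots> \<le> (\<Sum>n\<in>{1..N}. real n powr (-(1+\<sigma>)))"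
  proof (intro sum_mono)
    fix n assume "n \<in> {1..N}"
    then have "real n powr (-\<sigma>) - real (Suc n) powr (-\<sigma>) \<le> real n powr (-(1+\<sigma>)) * \<sigma>"
      using pw2[of n \<sigma>] s by (simp only: mult.commute) auto
    then show "(real n powr (-\<sigma>) - real (Suc n) powr (-\<sigma>)) / \<sigma> \<le> real n powr (-(1+\<sigma>))"
      by (rule pos_divide_le_eq[OF s, THEN iffD2])
  qed
  finally have a: "(\<Sum>n\<in>{1..N}. real n powr (-\<sigma>) - real (Suc n) powr (-\<sigma>)) / \<sigma> \<le> (\<Sum>n\<in>{1..N}. real n powr (-(1+\<sigma>)))" .
  have "(\<Sum>n\<in>{1..N}. real n powr (-\<sigma>) - real (Suc n) powr (-\<sigma>)) = 1 - real (Suc N) powr (-\<sigma>)"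
  proof -
    have "(\<Sum>n\<in>{Suc 0..N}. real n powr (-\<sigma>) - real (Suc n) powr (-\<sigma>)) = - ((\<Sum>n\<in>{Suc 0..N}. (\<lambda>k. real k powr (-\<sigma>)) (Suc n) - (\<lambda>k. real k powr (-\<sigma>)) n))"
      by (simp add: sum_negf[symmetric])
    also have "\<dots> = - (real (Suc N) powr (-\<sigma>) - real (Suc 0) powr (-\<sigma>))"
      by (subst sum_Suc_diff) auto
    finally show ?thesis by simp
  qed
  then show ?thesis using a by simp
qed


definition cpset :: "nat set \<Rightarrow> nat \<Rightarrow> nat set" where
  "cpset A M = {n\<in>{1..M}. \<forall>p\<in>A. \<not> p dvd n}"

lemma finite_cpset [simp]: "finite (cpset A M)" unfolding cpset_def by auto

lemma sieve:
  assumes "finite A" "\<forall>p\<in>A. prime p" "s > 0"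
  shows "(\<Prod>p\<in>A. 1 - real p powr (-s)) * (\<Sum>n\<in>{1..M}. real n powr (-s)) \<le> (\<Sum>n\<in>cpset A M. real n powr (-s))"
  using assms(1,2)
proof (induction A rule: finite_induct)
  case empty
  have "cpset {} M = {1..M}" unfolding cpset_def by auto
  then show ?case by simp
next
  case (insert q A)
  define f where "f n = real n powr (-s)" for n
  have q: "prime q" using insert by auto
  have q2: "real q \<ge> 2" using prime_ge_2_nat[OF q] by simp
  have fq: "0 \<le> 1 - f q" "f q \<ge> 0" unfolding f_def using q2 assms(3) powr_less_one[of "real q" "-s"]
    by auto
  let ?F = "cpset A M"
  let ?Q = "{n\<in>?F. q dvd n}"
  have F': "cpset (insert q A) M = {n\<in>?F. \<not> q dvd n}" unfolding cpset_def by auto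
  have split: "sum f ?F = sum f (cpset (insert q A) M) + sum f ?Q"
  proof -
    have "?F = {n\<in>?F. \<not> q dvd n} \<union> ?Q" by auto
    moreover have "sum f ({n\<in>?F. \<not> q dvd n} \<union> ?Q) = sum f {n\<in>?F. \<not> q dvd n} + sum f ?Q"
      by (rule sum.union_disjoint) auto
    ultimately have "sum f ?F = sum f {n\<in>?F. \<not> q dvd n} + sum f ?Q" by simp
    then show ?thesis unfolding F' .
  qed
  have Qsub: "?Q \<subseteq> (\<lambda>n. q * n) ` ?F"
  proof
    fix m assume m: "m \<in> ?Q"
    then obtain n where n: "m = q * n" by auto
    have m1: "m \<in> {1..M}" "\<forall>p\<in>A. \<not> p dvd m" using m unfolding cpset_def by auto
    then have "n \<ge> 1" using n by (cases n) auto
    moreover have "n \<le> m" using n q prime_gt_0_nat[OF q] m1 by auto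
    moreover have "\<forall>p\<in>A. \<not> p dvd n" using m1 n by auto
    ultimately have "n \<in> ?F" using m1 unfolding cpset_def by auto
    then show "m \<in> (\<lambda>n. q * n) ` ?F" using n by auto
  qed
  have "sum f ?Q \<le> sum f ((\<lambda>n. q * n) ` ?F)"
    using Qsub by (intro sum_mono2) (auto simp: f_def)
  also have "\<dots> \<le> sum (f \<circ> (\<lambda>n. q * n)) ?F"
    by (intro sum_image_le) (auto simp: f_def)
  also have "\<dots> = f q * sum f ?F"
    unfolding sum_distrib_left by (intro sum.cong refl) (auto simp: f_def powr_mult)
  finally have Q: "sum f ?Q \<le> f q * sum f ?F" .
  have "(\<Prod>p\<in>insert q A. 1 - f p) * (\<Sum>n\<in>{1..M}. f n) = (1 - f q) * ((\<Prod>p\<in>A. 1 - f p) * (\<Sum>n\<in>{1..M}. f n))"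
    using insert by simp
  also have "\<dots> \<le> (1 - f q) * sum f ?F"
    using insert fq unfolding f_def by (intro mult_left_mono) auto
  also have "\<dots> \<le> sum f (cpset (insert q A) M)" using split Q by (simp add: algebra_simps)
  finally show ?case unfolding f_def .
qed


lemma cpset_primes: "N \<ge> 1 \<Longrightarrow> cpset {p. prime p \<and> p \<le> N} N = {1}"
proof -
  assume N: "N \<ge> 1"
  have "n = 1" if n: "n \<in> cpset {p. prime p \<and> p \<le> N} N" for n
  proof (rule ccontr)
    assume "n \<noteq> 1"
    then obtain p where p: "prime p" "p dvd n" using prime_factor_nat by blast
    have n1: "n \<ge> 1" "n \<le> N" using n unfolding cpset_def by auto
    have "p \<le> n" using p(2) n1 by (intro dvd_imp_le) auto
    then have "p \<in> {p. prime p \<and> p \<le> N}" using p n1 by auto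
    moreover have "\<forall>q\<in>{p. prime p \<and> p \<le> N}. \<not> q dvd n" using n unfolding cpset_def by blast
    ultimately show False using p by blast
  qed
  moreover have "1 \<in> cpset {p. prime p \<and> p \<le> N} N" using N unfolding cpset_def
    by (auto dest: prime_gt_1_nat)
  ultimately show ?thesis by blast
qed

lemma prime_powr_less1: "prime p \<Longrightarrow> s > 0 \<Longrightarrow> real p powr (-s) < 1"
  using prime_ge_2_nat[of p] by (intro powr_less_one) auto

lemma euler_lower:
  assumes s: "s > 0" and N: "N \<ge> 1"
  shows "ln (\<Sum>n\<in>{1..N}. real n powr (-s)) \<le> (\<Sum>p\<in>{p. prime p \<and> p \<le> N}. - ln (1 - real p powr (-s)))"
proof -
  let ?A = "{p. prime p \<and> p \<le> N}"
  let ?S = "\<Sum>n\<in>{1..N}. real n powr (-s)"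
  let ?P = "\<Prod>p\<in>?A. 1 - real p powr (-s)"
  have fin: "finite ?A" by auto
  have pos: "0 < 1 - real p powr (-s)" if "p \<in> ?A" for p
    using prime_powr_less1[of p s] that s by auto
  have Pp: "?P > 0" by (rule prod_pos) (use pos in blast)
  have "?P * ?S \<le> (\<Sum>n\<in>cpset ?A N. real n powr (-s))"
    using s by (intro sieve) auto
  also have "\<dots> = 1" using N by (simp add: cpset_primes)
  finally have a0: "?P * ?S \<le> 1" .
  have a: "?S \<le> 1 / ?P" using a0 Pp by (simp add: le_divide_eq mult.commute)
  have "?S \<ge> (\<Sum>n\<in>{1}. real n powr (-s))"
    using N by (intro sum_mono2) auto
  then have S1: "?S \<ge> 1" by simp
  have "ln ?S \<le> ln (1 / ?P)"
    using a S1 Pp by (subst ln_le_cancel_iff) auto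
  also have "\<dots> = - ln ?P"
  proof -
    have gen: "\<And>y::real. y > 0 \<Longrightarrow> ln (1 / y) = - ln y" by (simp add: ln_div)
    show ?thesis by (rule gen[OF Pp])
  qed
  also have "ln ?P = (\<Sum>p\<in>?A. ln (1 - real p powr (-s)))"
  proof (rule ln_prod)
    fix p assume "p \<in> ?A"
    then show "1 - real p powr (-s) \<noteq> 0" using pos[of p] by linarith
  qed auto
  also have "- (\<Sum>p\<in>?A. ln (1 - real p powr (-s))) = (\<Sum>p\<in>?A. - ln (1 - real p powr (-s)))"
    by (rule sum_negf[symmetric])
  finally show ?thesis .
qed


lemma smooth_prod:
  assumes "finite A" "\<forall>p\<in>A. prime p" "s > 0"
  shows "\<exists>S. finite S \<and> 0 \<notin> S \<and> (\<forall>n\<in>S. \<forall>p. prime p \<longrightarrow> p dvd n \<longrightarrow> p \<in> A) \<and>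
           (\<Prod>p\<in>A. \<Sum>k<K. (real p powr (-s)) ^ k) = (\<Sum>n\<in>S. real n powr (-s))"
  using assms(1,2)
proof (induction A rule: finite_induct)
  case empty
  show ?case by (intro exI[of _ "{1}"]) auto
next
  case (insert q A)
  then obtain S where S: "finite S" "0 \<notin> S" "\<forall>n\<in>S. \<forall>p. prime p \<longrightarrow> p dvd n \<longrightarrow> p \<in> A"
      "(\<Prod>p\<in>A. \<Sum>k<K. (real p powr (-s)) ^ k) = (\<Sum>n\<in>S. real n powr (-s))" by auto
  have q: "prime q" using insert by auto
  define g where "g = (\<lambda>(k::nat, n::nat). q ^ k * n)"
  define S' where "S' = g ` ({..<K} \<times> S)"
  have S0: "0 < n" if "n \<in> S" for n
  proof (rule ccontr)
    assume "\<not> 0 < n"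
    then have "n = 0" by simp
    then show False using that S(2) by simp
  qed
  have qn: "\<not> q dvd n" if "n \<in> S" for n using S(3) that q insert(2) by auto
  have inj: "inj_on g ({..<K} \<times> S)"
  proof (rule inj_onI)
    fix x y assume x: "x \<in> {..<K} \<times> S" and y: "y \<in> {..<K} \<times> S" and e: "g x = g y"
    obtain k n where kn: "x = (k, n)" by (cases x)
    obtain k' n' where kn': "y = (k', n')" by (cases y)
    have n: "n \<in> S" "n' \<in> S" using x y kn kn' by auto
    have e': "q ^ k * n = q ^ k' * n'" using e kn kn' unfolding g_def by simp
    have m: "multiplicity q (q ^ k * n) = k" if "n \<in> S" for k n
    proof -
      have "n \<noteq> 0" using S0[OF that] by simp
      then have "multiplicity q (q ^ k * n) = multiplicity q (q ^ k) + multiplicity q n"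
        using q by (intro prime_elem_multiplicity_mult_distrib) auto
      also have "multiplicity q n = 0" using qn[OF that] by (rule not_dvd_imp_multiplicity_0)
      also have "multiplicity q (q ^ k) = k" using q by (intro multiplicity_prime_power) auto
      finally show ?thesis by simp
    qed
    have "k = k'" using m[OF n(1), of k] m[OF n(2), of k'] e' by simp
    moreover then have "n = n'" using e' q prime_gt_0_nat[OF q] by simp
    ultimately show "x = y" using kn kn' by simp
  qed
  show ?case
  proof (intro exI[of _ S'] conjI)
    show "finite S'" unfolding S'_def using S(1) by auto
    show "0 \<notin> S'" unfolding S'_def g_def using S(2) prime_gt_0_nat[OF q] by auto
    show "\<forall>n\<in>S'. \<forall>p. prime p \<longrightarrow> p dvd n \<longrightarrow> p \<in> insert q A"
    proof (intro ballI allI impI)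
      fix n p assume n: "n \<in> S'" and p: "prime p" "p dvd n"
      then obtain k m where km: "m \<in> S" "n = q ^ k * m" unfolding S'_def g_def by auto
      then have "p dvd q ^ k \<or> p dvd m" using p by (simp add: prime_dvd_mult_iff)
      then show "p \<in> insert q A"
      proof
        assume "p dvd q ^ k"
        then have "p dvd q" using p prime_dvd_power by blast
        then have "p = q" using p q primes_dvd_imp_eq by blast
        then show ?thesis by simp
      next
        assume "p dvd m" then show ?thesis using S(3) km p by auto
      qed
    qed
    have "(\<Sum>n\<in>S'. real n powr (-s)) = (\<Sum>x\<in>{..<K} \<times> S. real (g x) powr (-s))"
      unfolding S'_def by (subst sum.reindex[OF inj]) auto
    also have "\<dots> = (\<Sum>k<K. \<Sum>n\<in>S. (real q powr (-s)) ^ k * real n powr (-s))"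
      unfolding g_def using prime_gt_0_nat[OF q]
      by (subst sum.cartesian_product) (intro sum.cong refl, auto simp: powr_mult power_powr split: prod.splits)
    also have "\<dots> = (\<Sum>k<K. (real q powr (-s)) ^ k) * (\<Sum>n\<in>S. real n powr (-s))"
      by (simp add: sum_product)
    also have "\<dots> = (\<Prod>p\<in>insert q A. \<Sum>k<K. (real p powr (-s)) ^ k)"
      using insert S(4) by simp
    finally show "(\<Prod>p\<in>insert q A. \<Sum>k<K. (real p powr (-s)) ^ k) = (\<Sum>n\<in>S'. real n powr (-s))" ..
  qed
qed


lemma euler_upper:
  assumes A: "finite A" "\<forall>p\<in>A. prime p" and s: "\<sigma> > 0"
  shows "(\<Sum>p\<in>A. - ln (1 - real p powr (-(1+\<sigma>)))) \<le> ln (1 + 1 / \<sigma>)"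
proof -
  define x where "x p = real p powr (-(1+\<sigma>))" for p
  have x: "0 < x p" "x p < 1" if "p \<in> A" for p
    using that A s prime_powr_less1[of p "1+\<sigma>"] prime_gt_0_nat[of p] unfolding x_def by auto
  have bound: "(\<Prod>p\<in>A. \<Sum>k<K. (x p) ^ k) \<le> 1 + 1 / \<sigma>" for K
  proof -
    obtain S where S: "finite S" "0 \<notin> S"
      "(\<Prod>p\<in>A. \<Sum>k<K. (real p powr (-(1+\<sigma>))) ^ k) = (\<Sum>n\<in>S. real n powr (-(1+\<sigma>)))"
      using smooth_prod[OF A, of "1+\<sigma>" K] s by auto
    have "S \<subseteq> {1..Max S}"
    proof
      fix n assume n: "n \<in> S"
      then have "n \<noteq> 0" using S(2) by metis
      then show "n \<in> {1..Max S}" using n S(1) by (auto intro: Max_ge)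
    qed
    then have "(\<Sum>n\<in>S. real n powr (-(1+\<sigma>))) \<le> (\<Sum>n\<in>{1..Max S}. real n powr (-(1+\<sigma>)))"
      by (intro sum_mono2) auto
    also have "\<dots> \<le> 1 + 1 / \<sigma>" by (rule zeta_upper[OF s])
    finally show ?thesis using S(3) unfolding x_def by simp
  qed
  have lim: "(\<lambda>K. \<Prod>p\<in>A. \<Sum>k<K. (x p) ^ k) \<longlonglongrightarrow> (\<Prod>p\<in>A. 1 / (1 - x p))"
  proof (intro tendsto_prod)
    fix p assume p: "p \<in> A"
    have "(\<lambda>k. (x p) ^ k) sums (1 / (1 - x p))" using x[OF p] by (intro geometric_sums) auto
    then show "(\<lambda>K. \<Sum>k<K. (x p) ^ k) \<longlonglongrightarrow> 1 / (1 - x p)" by (simp add: sums_def)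
  qed
  have le: "(\<Prod>p\<in>A. 1 / (1 - x p)) \<le> 1 + 1 / \<sigma>"
    using lim bound by (intro LIMSEQ_le_const2) auto
  have pos: "0 < 1 / (1 - x p)" if "p \<in> A" for p using x[OF that] by simp
  have "(\<Sum>p\<in>A. - ln (1 - x p)) = (\<Sum>p\<in>A. ln (1 / (1 - x p)))"
  proof (intro sum.cong refl)
    fix p assume "p \<in> A"
    then have "1 - x p > 0" using x by auto
    then show "- ln (1 - x p) = ln (1 / (1 - x p))" by (simp add: ln_div)
  qed
  also have "\<dots> = ln (\<Prod>p\<in>A. 1 / (1 - x p))"
  proof (rule ln_prod[symmetric])
    fix p assume "p \<in> A"
    then show "1 / (1 - x p) \<noteq> 0" using pos[of p] by linarith
  qed (use A in auto)
  also have "\<dots> \<le> ln (1 + 1 / \<sigma>)"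
    using le pos s by (subst ln_le_cancel_iff) (auto intro: prod_pos add_pos_pos)
  finally show ?thesis unfolding x_def .
qed

lemma tangent_f:
  fixes a c :: real
  assumes "0 \<le> a" "a < 1" "0 \<le> c" "c < 1"
  shows "- ln (1 - c) \<ge> - ln (1 - a) + (c - a) / (1 - a)"
proof -
  have "ln ((1 - c) / (1 - a)) \<le> (1 - c) / (1 - a) - 1"
    using assms by (intro ln_le_minus_one) auto
  also have "(1 - c) / (1 - a) - 1 = (a - c) / (1 - a)" using assms by (simp add: field_simps)
  finally have "ln (1 - c) - ln (1 - a) \<le> (a - c) / (1 - a)" using assms by (simp add: ln_div)
  moreover have "(a - c) / (1 - a) = - ((c - a) / (1 - a))" by (metis minus_diff_eq minus_divide_left)
  ultimately show ?thesis by linarith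
qed

lemma compare_f:
  fixes t x :: real
  assumes t: "0 \<le> t" "t \<le> 1" and x: "0 \<le> x" "x \<le> 1/2"
  shows "\<bar>t * (- ln (1 - x)) - (- ln (1 - t * x))\<bar> \<le> 2 * (1 - t) * x^2"
proof -
  have tx: "0 \<le> t * x" "t * x \<le> x" using t x by (auto intro: mult_left_le_one_le)
  have fx1: "- ln (1 - x) \<ge> x" using ln_one_minus_pos_upper_bound[of x] x by auto
  have fx2: "- ln (1 - x) \<le> x + 2 * x^2" using ln_one_minus_pos_lower_bound[of x] x by auto
  have up1: "- ln (1 - t * x) \<ge> - ln (1 - x) + (t * x - x) / (1 - x)"
    using tx x by (intro tangent_f) auto
  have "(t * x - x) / (1 - x) = - ((1 - t) * (x / (1 - x)))" using x by (simp add: field_simps)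
  then have up2: "- ln (1 - t * x) \<ge> - ln (1 - x) - (1 - t) * (x / (1 - x))" using up1 by simp
  have "x / (1 - x) - x = x^2 / (1 - x)" using x by (simp add: field_simps power2_eq_square)
  also have "\<dots> \<le> x^2 / (1/2)" using x by (intro divide_left_mono) auto
  finally have xx: "x / (1 - x) - x \<le> 2 * x^2" by simp
  have "t * (- ln (1 - x)) - (- ln (1 - t * x)) \<le> (1 - t) * (x / (1 - x) - (- ln (1 - x)))"
    using up2 by (simp add: algebra_simps)
  also have "\<dots> \<le> (1 - t) * (2 * x^2)"
    using t fx1 xx by (intro mult_left_mono) auto
  finally have U0: "t * (- ln (1 - x)) - (- ln (1 - t * x)) \<le> (1 - t) * (2 * x^2)" .
  have "(1 - t) * (2 * x^2) = 2 * (1 - t) * x^2" by simp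
  then have U: "t * (- ln (1 - x)) - (- ln (1 - t * x)) \<le> 2 * (1 - t) * x^2" using U0 by linarith
  have lo1: "- ln (1 - x) \<ge> - ln (1 - t * x) + (x - t * x) / (1 - t * x)"
    using tx x by (intro tangent_f) auto
  have tx1: "t * x < 1" using tx x by linarith
  have "(x - t * x) / (1 - t * x) \<ge> (x - t * x) / 1"
    using tx x t tx1 by (intro divide_left_mono) (auto simp: algebra_simps mult_left_le_one_le)
  then have lo2: "- ln (1 - t * x) \<le> - ln (1 - x) - (1 - t) * x" using lo1 by (simp add: algebra_simps)
  have "t * (- ln (1 - x)) - (- ln (1 - t * x)) \<ge> (1 - t) * (x - (- ln (1 - x)))"
    using lo2 by (simp add: algebra_simps)
  moreover have "(1 - t) * (x - (- ln (1 - x))) \<ge> (1 - t) * (- 2 * x^2)"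
    using t fx2 by (intro mult_left_mono) auto
  moreover have "(1 - t) * (- 2 * x^2) = - (2 * (1 - t) * x^2)" by simp
  ultimately have L: "t * (- ln (1 - x)) - (- ln (1 - t * x)) \<ge> - (2 * (1 - t) * x^2)" by linarith
  show ?thesis using U L by linarith
qed

lemma compare_prime:
  assumes p: "prime p" and s: "\<sigma> > 0"
  shows "\<bar>(- ln (1 - 1 / real p)) * real p powr (-\<sigma>) - (- ln (1 - real p powr (-(1+\<sigma>))))\<bar>
          \<le> 2 * \<sigma> * ln (real p) / real p ^ 2"
proof -
  have p2: "real p \<ge> 2" using prime_ge_2_nat[OF p] by simp
  define t where "t = real p powr (-\<sigma>)"
  define x where "x = 1 / real p"
  have t: "0 \<le> t" "t \<le> 1" unfolding t_def using p2 s by (auto intro: powr_le1 powr_less_one[THEN less_imp_le])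
  have x: "0 \<le> x" "x \<le> 1/2" unfolding x_def using p2 by auto
  have tx: "t * x = real p powr (-(1+\<sigma>))"
  proof -
    have a: "real p powr (-(1+\<sigma>)) = real p powr (-\<sigma>) * real p powr (-1)"
    proof -
      have "-(1+\<sigma>) = -\<sigma> + (-1)" by simp
      then show ?thesis by (simp only: powr_add)
    qed
    show ?thesis unfolding a t_def x_def using p2 by (simp add: powr_neg_one)
  qed
  have "1 - t \<le> \<sigma> * ln (real p)"
  proof -
    have "t = exp (- \<sigma> * ln (real p))" unfolding t_def using p2 by (simp add: powr_def)
    moreover have "exp (- \<sigma> * ln (real p)) \<ge> 1 + (- \<sigma> * ln (real p))" by (rule exp_ge_add_one_self)
    ultimately show ?thesis by simp
  qed
  then have "2 * (1 - t) * x^2 \<le> 2 * (\<sigma> * ln (real p)) * x^2"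
    using t by (intro mult_right_mono mult_left_mono) auto
  also have "\<dots> = 2 * \<sigma> * ln (real p) / real p ^ 2" unfolding x_def by (simp add: power_one_over divide_inverse power_inverse)
  finally have b: "2 * (1 - t) * x^2 \<le> 2 * \<sigma> * ln (real p) / real p ^ 2" .
  have "\<bar>t * (- ln (1 - x)) - (- ln (1 - t * x))\<bar> \<le> 2 * (1 - t) * x^2"
    using t x by (rule compare_f)
  then show ?thesis using b unfolding tx by (simp add: t_def x_def mult.commute)
qed


definition psi :: "nat \<Rightarrow> real" where "psi n = (\<Sum>d\<in>{1..n}. mangoldt d)"

lemma psi_mono: "m \<le> n \<Longrightarrow> psi m \<le> psi n"
  unfolding psi_def by (intro sum_mono2) (auto intro: mangoldt_nonneg)

lemma psi_nonneg: "psi n \<ge> 0"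
  unfolding psi_def by (intro sum_nonneg) (auto intro: mangoldt_nonneg)

lemma count_dvd: "(\<Sum>m\<in>{1..n}. if d dvd m then 1 else 0 :: real) = real (n div d)"
proof (induction n)
  case 0 then show ?case by simp
next
  case (Suc n)
  have "{1..Suc n} = insert (Suc n) {1..n}" by auto
  then have "(\<Sum>m\<in>{1..Suc n}. if d dvd m then 1 else 0 :: real)
     = (if d dvd Suc n then 1 else 0) + real (n div d)" using Suc by simp
  also have "\<dots> = real (Suc n div d)"
    by (auto simp: div_Suc dvd_eq_mod_eq_0)
  finally show ?case .
qed

lemma ln_fact_mangoldt: "ln (fact n) = (\<Sum>d\<in>{1..n}. mangoldt d * real (n div d))"
proof -
  have "ln (fact n :: real) = (\<Sum>m\<in>{1..n}. ln (real m))"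
    unfolding fact_prod by (subst ln_prod[symmetric]) auto
  also have "\<dots> = (\<Sum>m\<in>{1..n}. \<Sum>d\<in>{1..n}. if d dvd m then mangoldt d else 0)"
  proof (intro sum.cong refl)
    fix m assume m: "m \<in> {1..n}"
    have "ln (real m) = (\<Sum>d | d dvd m. mangoldt d)" using m by (simp add: mangoldt_sum)
    also have "\<dots> = (\<Sum>d\<in>{1..n}. if d dvd m then mangoldt d else 0)"
      using m by (subst sum.inter_filter[symmetric]) (auto intro!: sum.cong dest: dvd_imp_le)
    finally show "ln (real m) = \<dots>" .
  qed
  also have "\<dots> = (\<Sum>d\<in>{1..n}. \<Sum>m\<in>{1..n}. if d dvd m then mangoldt d else 0)"
    by (rule sum.swap)
  also have "\<dots> = (\<Sum>d\<in>{1..n}. mangoldt d * real (n div d))"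
  proof (intro sum.cong refl)
    fix d
    have "(\<Sum>m\<in>{1..n}. if d dvd m then mangoldt d else 0) = mangoldt d * (\<Sum>m\<in>{1..n}. if d dvd m then 1 else (0::real))"
      by (subst sum_distrib_left) (intro sum.cong, auto)
    then show "(\<Sum>m\<in>{1..n}. if d dvd m then mangoldt d else 0) = mangoldt d * real (n div d)"
      by (simp only: count_dvd)
  qed
  finally show ?thesis .
qed

lemma psi_double: "psi (2*n) - psi n \<le> 2 * real n * ln 2"
proof -
  have "psi (2*n) - psi n = (\<Sum>d\<in>{1..2*n}. if n < d then mangoldt d else 0)"
  proof -
    have "psi (2*n) = (\<Sum>d\<in>{1..2*n}. (if n < d then mangoldt d else 0) + (if n < d then 0 else mangoldt d))"
      unfolding psi_def by (intro sum.cong) auto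
    also have "\<dots> = (\<Sum>d\<in>{1..2*n}. if n < d then mangoldt d else 0) + (\<Sum>d\<in>{1..2*n}. if n < d then 0 else mangoldt d)"
      by (rule sum.distrib)
    also have "(\<Sum>d\<in>{1..2*n}. if n < d then 0 else mangoldt d) = psi n"
      unfolding psi_def by (intro sum.mono_neutral_cong_right) auto
    finally show ?thesis by simp
  qed
  also have "\<dots> \<le> (\<Sum>d\<in>{1..2*n}. mangoldt d * (real ((2*n) div d) - 2 * real (n div d)))"
  proof (intro sum_mono)
    fix d assume d: "d \<in> {1..2*n}"
    have eq: "(2 * n) div d = 2 * (n div d) + (2 * (n mod d)) div d"
      using div_mult1_eq by blast
    then have a: "2 * (n div d) \<le> (2*n) div d" by simp
    have b: "n < d \<Longrightarrow> real ((2*n) div d) - 2 * real (n div d) \<ge> 1"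
    proof -
      assume nd: "n < d"
      then have "n div d = 0" by simp
      moreover have "0 < (2*n) div d" using d by (simp add: div_greater_zero_iff)
      ultimately show ?thesis by simp
    qed
    have c: "real ((2*n) div d) - 2 * real (n div d) \<ge> 0"
      using a by (metis diff_ge_0_iff_ge of_nat_le_iff of_nat_mult of_nat_numeral)
    show "(if n < d then mangoldt d else 0) \<le> mangoldt d * (real ((2*n) div d) - 2 * real (n div d))"
      using b c mangoldt_nonneg[of d]
      by (auto intro: mult_nonneg_nonneg simp: mult_le_cancel_left1 dest: mult_left_mono[of 1 _ "mangoldt d"])
  qed
  also have "\<dots> = ln (fact (2*n)) - 2 * ln (fact n)"
  proof -
    have "2 * ln (fact n) = (\<Sum>d\<in>{1..2*n}. mangoldt d * (2 * real (n div d)))"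
    proof -
      have "ln (fact n :: real) = (\<Sum>d\<in>{1..2*n}. mangoldt d * real (n div d))"
        unfolding ln_fact_mangoldt by (intro sum.mono_neutral_left) auto
      then show ?thesis by (simp add: sum_distrib_left algebra_simps)
    qed
    then show ?thesis by (simp add: ln_fact_mangoldt sum_subtractf algebra_simps)
  qed
  also have "\<dots> = ln (real ((2*n) choose n))"
  proof -
    have "real ((2*n) choose n) = fact (2*n) / (fact n * fact n)"
      using binomial_fact[of n "2*n"] by (simp add: mult_2)
    then show ?thesis by (simp add: ln_div ln_mult)
  qed
  also have "\<dots> \<le> ln (2 ^ (2*n))"
    using binomial_le_pow2[of "2*n" n] by (subst ln_le_cancel_iff) (auto simp del: of_nat_power simp: of_nat_power[symmetric])
  also have "\<dots> = 2 * real n * ln 2" by (simp add: ln_realpow)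
  finally show ?thesis .
qed

lemma psi_le: "psi n \<le> 4 * real n"
proof (induction n rule: less_induct)
  case (less m)
  show ?case
  proof (cases "m = 0")
    case True then show ?thesis by (simp add: psi_def)
  next
    case False
    define n where "n = m div 2"
    have n: "n < m" using False unfolding n_def by auto
    have ev: "psi (2*n) \<le> 6 * real n"
    proof -
      have "2 * real n * ln 2 \<le> 2 * real n * 1" using ln_2_less_1 by (intro mult_left_mono) auto
      then show ?thesis using psi_double[of n] less[OF n] by linarith
    qed
    show ?thesis
    proof (cases "even m")
      case True
      then have "m = 2*n" unfolding n_def by auto
      then show ?thesis using ev by simp
    next
      case False
      then have m: "m = Suc (2*n)" unfolding n_def by presburger
      have "psi m = psi (2*n) + mangoldt m"
        unfolding psi_def m by simp
      also have "mangoldt m \<le> ln (real m)" using m by (intro mangoldt_le) auto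
      also have "ln (real m) \<le> real m - 1" using m by (intro ln_le_minus_one) auto
      finally show ?thesis using ev m by simp
    qed
  qed
qed


lemma real_div_bounds:
  assumes "d > 0"
  shows "real n / real d - 1 \<le> real (n div d)" "real (n div d) \<le> real n / real d"
proof -
  have e: "real n = real (n div d) * real d + real (n mod d)"
    by (metis div_mult_mod_eq of_nat_add of_nat_mult)
  have m: "real (n mod d) < real d" using assms by simp
  show "real n / real d - 1 \<le> real (n div d)"
    using assms e m by (simp add: field_simps)
  show "real (n div d) \<le> real n / real d"
    using assms e by (simp add: field_simps)
qed

lemma ln_fact_le: "ln (fact n :: real) \<le> real n * ln (real n)"
proof (cases "n = 0")
  case True then show ?thesis by simp
next
  case False
  have "ln (fact n :: real) \<le> ln (real (n ^ n))"
    by (subst ln_le_cancel_iff) (use fact_le_power[of n, where 'a=real] in auto)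
  also have "\<dots> = real n * ln (real n)" using False by (simp add: ln_realpow)
  finally show ?thesis .
qed

lemma ln_fact_ge: "real n * ln (real n) - real n \<le> ln (fact n :: real)"
proof (cases "n = 0")
  case True then show ?thesis by simp
next
  case False
  have "(\<lambda>k. real n ^ k /\<^sub>R fact k) sums exp (real n)" by (rule exp_converges)
  then have "(\<Sum>k\<in>{n}. real n ^ k /\<^sub>R fact k) \<le> exp (real n)"
    using sum_le_suminf[of "\<lambda>k. real n ^ k /\<^sub>R fact k" "{n}"] by (auto simp: sums_iff)
  then have "real n ^ n / fact n \<le> exp (real n)" by (simp add: divide_inverse mult.commute)
  then have "ln (real n ^ n / fact n) \<le> ln (exp (real n))"
    using False by (subst ln_le_cancel_iff) auto
  then have "ln (real n ^ n / fact n) \<le> real n" by simp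
  then show ?thesis using False by (simp add: ln_div ln_realpow)
qed

definition S :: "nat \<Rightarrow> real" where "S n = (\<Sum>d\<in>{1..n}. mangoldt d / real d)"

lemma S_lower: "S n \<ge> ln (real n) - 1"
proof (cases "n = 0")
  case True then show ?thesis by (simp add: S_def)
next
  case False
  have "real n * ln (real n) - real n \<le> ln (fact n :: real)" by (rule ln_fact_ge)
  also have "\<dots> = (\<Sum>d\<in>{1..n}. mangoldt d * real (n div d))" by (rule ln_fact_mangoldt)
  also have "\<dots> \<le> (\<Sum>d\<in>{1..n}. mangoldt d * (real n / real d))"
    by (intro sum_mono mult_left_mono real_div_bounds mangoldt_nonneg) auto
  also have "\<dots> = real n * S n" unfolding S_def by (simp add: sum_distrib_left field_simps)
  finally have "real n * (ln (real n) - 1) \<le> real n * S n" by (simp add: algebra_simps)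
  then show ?thesis using False by simp
qed

lemma S_upper: "S n \<le> ln (real n) + 4"
proof (cases "n = 0")
  case True then show ?thesis by (simp add: S_def)
next
  case False
  have "real n * S n - psi n = (\<Sum>d\<in>{1..n}. real n * (mangoldt d / real d) - mangoldt d)"
    unfolding S_def psi_def by (simp add: sum_distrib_left sum_subtractf)
  also have "\<dots> = (\<Sum>d\<in>{1..n}. mangoldt d * (real n / real d - 1))"
    by (intro sum.cong refl) (auto simp: field_simps)
  also have "\<dots> \<le> (\<Sum>d\<in>{1..n}. mangoldt d * real (n div d))"
    by (intro sum_mono mult_left_mono real_div_bounds mangoldt_nonneg) auto
  also have "\<dots> = ln (fact n)" by (rule ln_fact_mangoldt[symmetric])
  also have "\<dots> \<le> real n * ln (real n)" by (rule ln_fact_le)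
  finally have "real n * S n \<le> real n * (ln (real n) + 4)"
    using psi_le[of n] by (simp add: algebra_simps)
  then show ?thesis using False by simp
qed


definition T :: "nat \<Rightarrow> real" where "T n = (\<Sum>d\<in>{1..n}. if prime d then ln (real d) / real d else 0)"

lemma geo_tail:
  assumes "prime p"
  shows "(\<Sum>k\<in>{2..n}. ln (real p) / real p ^ k) \<le> ln (real p) / (real p * (real p - 1))"
proof -
  define x where "x = 1 / real p"
  have p2: "real p \<ge> 2" using prime_ge_2_nat[OF assms] by simp
  have x: "0 < x" "x \<le> 1/2" unfolding x_def using p2 by auto
  have "(\<Sum>k\<in>{2..n}. x ^ k) \<le> x^2 / (1 - x)"
  proof (cases "n \<ge> 2")
    case False
    then have "{2..n} = {}" by auto
    then show ?thesis using x by simp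
  next
    case True
    have e: "{..n} = {0,1} \<union> {2..n}" using True by auto
    have "(\<Sum>k\<le>n. x ^ k) = (\<Sum>k\<in>{0,1}. x ^ k) + (\<Sum>k\<in>{2..n}. x ^ k)"
      unfolding e by (rule sum.union_disjoint) auto
    then have "(\<Sum>k\<le>n. x ^ k) = 1 + x + (\<Sum>k\<in>{2..n}. x ^ k)" by simp
    moreover have "(\<Sum>k\<le>n. x ^ k) = (1 - x ^ Suc n) / (1 - x)"
      using x by (subst sum_gp0) auto
    moreover have "(1 - x ^ Suc n) / (1 - x) \<le> 1 / (1 - x)"
      using x by (intro divide_right_mono) auto
    moreover have "1 / (1 - x) - 1 - x = x^2 / (1 - x)"
      using x by (simp add: field_simps power2_eq_square)
    ultimately show ?thesis by linarith
  qed
  moreover have "x^2 / (1 - x) = 1 / (real p * (real p - 1))"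
    unfolding x_def using p2 by (simp add: field_simps power2_eq_square)
  ultimately have "(\<Sum>k\<in>{2..n}. x ^ k) \<le> 1 / (real p * (real p - 1))" by simp
  then have "ln (real p) * (\<Sum>k\<in>{2..n}. x ^ k) \<le> ln (real p) * (1 / (real p * (real p - 1)))"
    using p2 by (intro mult_left_mono) auto
  then show ?thesis unfolding x_def by (simp add: sum_distrib_left power_one_over divide_inverse power_inverse)
qed

lemma tele32:
  assumes "(m::real) \<ge> 2"
  shows "1 / (m * sqrt m) \<le> 2 * (1 / sqrt (m - 1) - 1 / sqrt m)"
proof -
  define a where "a = sqrt (m - 1)"
  define b where "b = sqrt m"
  have a: "a > 0" "a * a = m - 1" using assms unfolding a_def by auto
  have b: "b > 0" "b * b = m" using assms unfolding b_def by auto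
  have ab: "a \<le> b" unfolding a_def b_def by simp
  have d: "(b - a) * (a + b) = 1" using a b by (simp add: algebra_simps)
  have d': "b - a = 1 / (a + b)" using d a b by (auto simp: eq_divide_eq)
  have e1: "2 * (1 / a - 1 / b) = 2 * (b - a) / (a * b)" using a b by (simp add: diff_frac_eq)
  have e2: "2 * (b - a) / (a * b) = 2 / (a * b * (a + b))" unfolding d' using a b by (simp add: field_simps)
  have e3: "2 / (b * b * (2 * b)) \<le> 2 / (a * b * (a + b))"
    using a b ab by (intro divide_left_mono mult_mono mult_pos_pos) auto
  have "2 / (b * b * (2 * b)) \<le> 2 * (1 / a - 1 / b)" using e1 e2 e3 by simp
  moreover have "2 / (b * b * (2 * b)) = 1 / (m * b)" using b by (simp add: field_simps)
  ultimately show ?thesis unfolding a_def b_def using assms by (simp add: abs_of_nonneg)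
qed

lemma sum_32: "(\<Sum>m\<in>{2..n}. 1 / (real m * sqrt (real m))) \<le> 2"
proof (cases "n \<ge> 2")
  case False then show ?thesis by simp
next
  case True
  have "(\<Sum>m\<in>{2..n}. 1 / (real m * sqrt (real m))) \<le> (\<Sum>m\<in>{2..n}. 2 * (1 / sqrt (real m - 1) - 1 / sqrt (real m)))"
    by (intro sum_mono tele32) auto
  also have "\<dots> = 2 * (1 - 1 / sqrt (real n))"
  proof -
    define f where "f k = 1 / sqrt (real k)" for k
    have tel0: "(\<Sum>k\<in>{Suc 1..n}. f k - f (k - 1)) = f n - f 1" using True by (intro sum_telescope'') auto
    have tel: "(\<Sum>k\<in>{Suc 1..n}. f (k - 1) - f k) = f 1 - f n" using tel0 by (simp add: sum_subtractf)
    have e: "{2..n} = {Suc 1..n}" by auto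
    have "(\<Sum>m\<in>{2..n}. 2 * (1 / sqrt (real m - 1) - 1 / sqrt (real m))) = 2 * (\<Sum>k\<in>{Suc 1..n}. f (k - 1) - f k)"
      unfolding e f_def sum_distrib_left by (intro sum.cong refl) (auto simp: of_nat_diff)
    then show ?thesis using tel unfolding f_def by simp
  qed
  also have "\<dots> \<le> 2" by simp
  finally show ?thesis .
qed

lemma q32: "(m::real) \<ge> 2 \<Longrightarrow> 2 * sqrt m / (m*(m-1)) \<le> 4 / (m * sqrt m)"
proof -
  assume m: "m \<ge> 2"
  define s where "s = sqrt m"
  have s0: "s > 0" using m unfolding s_def by auto
  have s1: "s * s = m" using m unfolding s_def by simp
  have "2*m \<le> m*m" using mult_right_mono[of 2 m m] m by simp
  then have a: "m * m / 2 \<le> m * (m - 1)" by (simp add: algebra_simps)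
  have "2 * sqrt m / (m*(m-1)) \<le> 2 * sqrt m / (m * m / 2)"
    using a m by (intro divide_left_mono) auto
  also have "2 * sqrt m / (m * m / 2) = 4 / (m * sqrt m)"
    unfolding s_def[symmetric] s1[symmetric] using s0 by (simp add: field_simps)
  finally show ?thesis .
qed

lemma ln_bound_32:
  assumes "m \<ge> 2"
  shows "ln (real m) / (real m * (real m - 1)) \<le> 4 * (1 / (real m * sqrt (real m)))"
proof -
  have m: "real m \<ge> 2" using assms by simp
  have "ln (real m) = 2 * ln (sqrt (real m))" using m by (simp add: ln_sqrt)
  also have "\<dots> \<le> 2 * (sqrt (real m) - 1)" using m by (intro mult_left_mono ln_le_minus_one) auto
  also have "\<dots> \<le> 2 * sqrt (real m)" by simp
  finally have l: "ln (real m) \<le> 2 * sqrt (real m)" .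
  have "ln (real m) / (real m * (real m - 1)) \<le> 2 * sqrt (real m) / (real m * (real m - 1))"
    using l m by (intro divide_right_mono) auto
  also have "\<dots> \<le> 4 / (real m * sqrt (real m))" using q32 m by blast
  finally show ?thesis by simp
qed

lemma sum_ln_bound: "(\<Sum>m\<in>{2..n}. ln (real m) / (real m * (real m - 1))) \<le> 8"
proof -
  have "(\<Sum>m\<in>{2..n}. ln (real m) / (real m * (real m - 1))) \<le> (\<Sum>m\<in>{2..n}. 4 * (1 / (real m * sqrt (real m))))"
    by (intro sum_mono ln_bound_32) auto
  also have "\<dots> = 4 * (\<Sum>m\<in>{2..n}. 1 / (real m * sqrt (real m)))" by (simp add: sum_distrib_left)
  also have "\<dots> \<le> 4 * 2" using sum_32[of n] by (intro mult_left_mono) auto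
  finally show ?thesis by simp
qed

lemma S_minus_T: "0 \<le> S n - T n" "S n - T n \<le> 8"
proof -
  have eq: "S n - T n = (\<Sum>d\<in>{1..n}. if prime d then 0 else mangoldt d / real d)"
    unfolding S_def T_def by (subst sum_subtractf[symmetric]) (intro sum.cong refl, auto)
  show "0 \<le> S n - T n" unfolding eq by (intro sum_nonneg) (auto intro: mangoldt_nonneg divide_nonneg_nonneg)
  define Q where "Q = {d\<in>{1..n}. primepow d \<and> \<not> prime d}"
  define D where "D = {p\<in>{1..n}. prime p} \<times> {2..n}"
  define g where "g = (\<lambda>(p::nat,k::nat). p ^ k)"
  define h where "h = (\<lambda>d. mangoldt d / real d :: real)"
  have h0: "h d \<ge> 0" for d unfolding h_def by (auto intro: mangoldt_nonneg divide_nonneg_nonneg)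
  have "(\<Sum>d\<in>{1..n}. if prime d then 0 else mangoldt d / real d) = (\<Sum>d\<in>Q. h d)"
    unfolding Q_def h_def by (intro sum.mono_neutral_cong_right) (auto simp: mangoldt_def)
  also have "Q \<subseteq> g ` D"
  proof
    fix d assume "d \<in> Q"
    then have d: "d \<in> {1..n}" "primepow d" "\<not> prime d" unfolding Q_def by auto
    then obtain p k where pk: "prime p" "k > 0" "d = p ^ k" unfolding primepow_def by auto
    have "k \<noteq> 1" using pk d by auto
    then have k2: "k \<ge> 2" using pk by auto
    have p2: "p \<ge> 2" using pk prime_ge_2_nat by auto
    have "k < 2 ^ k" by (rule less_exp)
    also have "2 ^ k \<le> p ^ k" using p2 by (rule power_mono) auto
    finally have "k \<le> n" using d pk by auto
    moreover have "p \<le> p ^ k" using pk p2 by (simp add: self_le_power)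
    ultimately have "(p, k) \<in> D" unfolding D_def using d pk k2 p2 by auto
    then show "d \<in> g ` D" unfolding g_def using pk by force
  qed
  then have "(\<Sum>d\<in>Q. h d) \<le> (\<Sum>d\<in>g ` D. h d)"
    unfolding D_def by (intro sum_mono2 finite_imageI) (auto intro: h0)
  also have "\<dots> \<le> (\<Sum>x\<in>D. (h \<circ> g) x)" unfolding D_def by (intro sum_image_le h0) auto
  also have "\<dots> = (\<Sum>p\<in>{p\<in>{1..n}. prime p}. \<Sum>k\<in>{2..n}. ln (real p) / real p ^ k)"
    unfolding D_def by (subst sum.cartesian_product) (intro sum.cong refl, auto simp: g_def h_def split: prod.splits)
  also have "\<dots> \<le> (\<Sum>p\<in>{p\<in>{1..n}. prime p}. ln (real p) / (real p * (real p - 1)))"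
    by (intro sum_mono geo_tail) auto
  also have "\<dots> \<le> (\<Sum>m\<in>{2..n}. ln (real m) / (real m * (real m - 1)))"
  proof (intro sum_mono2)
    show "{p \<in> {1..n}. prime p} \<subseteq> {2..n}" using prime_ge_2_nat by auto
    fix m assume "m \<in> {2..n} - {p \<in> {1..n}. prime p}"
    then show "0 \<le> ln (real m) / (real m * (real m - 1))" by auto
  qed auto
  also have "\<dots> \<le> 8" by (rule sum_ln_bound)
  finally show "S n - T n \<le> 8" unfolding eq .
qed

lemma T_bounds: "n \<ge> 1 \<Longrightarrow> \<bar>T n - ln (real n)\<bar> \<le> 9"
  using S_minus_T[of n] S_lower[of n] S_upper[of n] by linarith


lemma abel_sum:
  fixes f u :: "nat \<Rightarrow> real"
  assumes "N \<ge> 2"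
  shows "(\<Sum>n\<in>{2..N}. (f n - f (n-1)) * u n) = f N * u N - f 1 * u 2 - (\<Sum>n\<in>{2..<N}. f n * (u (Suc n) - u n))"
  using assms
proof (induction N rule: nat_induct_at_least)
  case base then show ?case by (simp add: numeral_2_eq_2 algebra_simps)
next
  case (Suc N)
  have e1: "{2..Suc N} = insert (Suc N) {2..N}" using Suc by auto
  have e2: "{2..<Suc N} = insert N {2..<N}" using Suc by auto
  show ?case unfolding e1 e2 using Suc by (simp add: algebra_simps)
qed

definition recip :: "nat \<Rightarrow> real" where "recip N = (\<Sum>n\<in>{1..N}. if prime n then 1 / real n else 0)"

definition u :: "nat \<Rightarrow> real" where "u n = 1 / ln (real n)"

lemma T_1: "T 1 = 0" by (simp add: T_def)

lemma T_diff: "n \<ge> 1 \<Longrightarrow> T n - T (n - 1) = (if prime n then ln (real n) / real n else 0)"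
proof -
  assume n: "n \<ge> 1"
  have "{1..n} = insert n {1..n-1}" using n by auto
  then show ?thesis unfolding T_def using n by simp
qed

lemma recip_abel:
  assumes "N \<ge> 2"
  shows "recip N = T N * u N - (\<Sum>n\<in>{2..<N}. T n * (u (Suc n) - u n))"
proof -
  have "recip N = (\<Sum>n\<in>{2..N}. if prime n then 1 / real n else 0)"
    unfolding recip_def by (intro sum.mono_neutral_cong_right) (auto dest: prime_ge_2_nat)
  also have "\<dots> = (\<Sum>n\<in>{2..N}. (T n - T (n-1)) * u n)"
  proof (intro sum.cong refl)
    fix n assume n: "n \<in> {2..N}"
    then have "ln (real n) > 0" by auto
    then show "(if prime n then 1 / real n else 0) = (T n - T (n-1)) * u n"
      using n T_diff[of n] by (auto simp: u_def)
  qed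
  also have "\<dots> = T N * u N - T 1 * u 2 - (\<Sum>n\<in>{2..<N}. T n * (u (Suc n) - u n))"
    by (rule abel_sum[OF assms])
  finally show ?thesis by (simp add: T_def)
qed

definition R :: "nat \<Rightarrow> real" where "R n = T n - ln (real n)"
definition tt :: "nat \<Rightarrow> real" where "tt n = 1 - ln (real n) / ln (real (Suc n))"
definition ee :: "nat \<Rightarrow> real" where "ee n = ln (ln (real (Suc n))) - ln (ln (real n)) - tt n"

lemma R_bound: "n \<ge> 1 \<Longrightarrow> \<bar>R n\<bar> \<le> 9" unfolding R_def using T_bounds by simp

lemma ln_ge_23: "n \<ge> 2 \<Longrightarrow> ln (real (Suc n)) \<ge> 2/3"
proof -
  assume n: "n \<ge> 2"
  have "ln (1 / real (Suc n)) \<le> 1 / real (Suc n) - 1" by (intro ln_le_minus_one) auto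
  then have "ln (real (Suc n)) \<ge> 1 - 1 / real (Suc n)" by (simp add: ln_div)
  moreover have "1 / real (Suc n) \<le> 1/3" using n by (simp add: field_simps)
  ultimately show ?thesis by linarith
qed

lemma tt_bounds: "n \<ge> 3 \<Longrightarrow> 0 \<le> tt n \<and> tt n \<le> 3 / (2 * real n)"
proof -
  assume n: "n \<ge> 3"
  have l: "ln (real (Suc n)) \<ge> 2/3" using n by (intro ln_ge_23) auto
  have lt: "ln (real n) \<le> ln (real (Suc n))" using n by simp
  have d: "ln (real (Suc n)) - ln (real n) \<le> 1 / real n"
  proof -
    have "1 + 1 / real n = real (Suc n) / real n" using n by (simp add: field_simps)
    then have "ln (real (Suc n)) - ln (real n) = ln (1 + 1 / real n)"
      using n by (simp add: ln_div)
    also have "\<dots> \<le> 1 / real n" by (intro ln_add_one_self_le_self) auto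
    finally show ?thesis .
  qed
  have tt_eq: "tt n = (ln (real (Suc n)) - ln (real n)) / ln (real (Suc n))"
  proof -
    have "ln (real (Suc n)) \<noteq> 0" using l by linarith
    then show ?thesis unfolding tt_def by (simp add: diff_divide_distrib)
  qed
  have "tt n \<le> (1 / real n) / (2/3)"
    unfolding tt_eq using l d lt by (intro frac_le) auto
  also have "\<dots> = 3 / (2 * real n)" by simp
  finally show ?thesis unfolding tt_eq using l lt by auto
qed

lemma ee_bounds: "n \<ge> 3 \<Longrightarrow> \<bar>ee n\<bar> \<le> 5 * inverse (real n ^ 2)"
proof -
  assume n: "n \<ge> 3"
  have t: "0 \<le> tt n" "tt n \<le> 3 / (2 * real n)" using tt_bounds[OF n] by auto
  have "3 / (2 * real n) \<le> 1/2" using n by (simp add: field_simps)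
  then have t2: "tt n \<le> 1/2" using t by linarith
  have l0: "ln (real n) > 0" using n by simp
  have l1: "ln (real (Suc n)) > 0" using n by simp
  have "1 - tt n = ln (real n) / ln (real (Suc n))" unfolding tt_def by simp
  then have "ln (1 - tt n) = ln (ln (real n)) - ln (ln (real (Suc n)))"
    using l0 l1 by (simp add: ln_div)
  then have ee: "ee n = - ln (1 - tt n) - tt n" unfolding ee_def by simp
  have lo: "- tt n - 2 * (tt n)^2 \<le> ln (1 - tt n)" using t t2 by (intro ln_one_minus_pos_lower_bound) auto
  have up: "ln (1 - tt n) \<le> - tt n" using t t2 by (intro ln_one_minus_pos_upper_bound) auto
  have "(tt n)^2 \<le> (3 / (2 * real n))^2" using t by (intro power_mono) auto
  also have "\<dots> = (9/4) * inverse (real n ^ 2)" by (simp add: power_divide field_simps)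
  finally have "\<bar>ee n\<bar> \<le> 2 * ((9/4) * inverse (real n ^ 2))" unfolding ee using lo up by auto
  also have "\<dots> \<le> 5 * inverse (real n ^ 2)"
  proof -
    have "0 \<le> inverse (real n ^ 2)" by simp
    then show ?thesis by linarith
  qed
  finally show ?thesis .
qed

lemma u_tendsto: "u \<longlonglongrightarrow> 0"
proof -
  have "((\<lambda>x::real. 1 / ln x) \<longlongrightarrow> 0) at_top" by real_asymp
  then show ?thesis unfolding u_def by (rule filterlim_compose) (rule filterlim_real_sequentially)
qed

definition G :: "nat \<Rightarrow> real" where "G n = (if 2 \<le> n then R n * (u n - u (Suc n)) - ee n else 0)"

lemma summable_G: "summable G"
proof (rule summable_comparison_test)
  show "\<exists>N. \<forall>n\<ge>N. norm (G n) \<le> 9 * (u n - u (Suc n)) + 5 * inverse (real n ^ 2)"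
  proof (intro exI allI impI)
    fix n :: nat assume n: "n \<ge> 3"
    have uu: "u n - u (Suc n) \<ge> 0" unfolding u_def using n
      by (intro diff_ge_0_iff_ge[THEN iffD2] divide_left_mono mult_pos_pos) auto
    have "\<bar>R n * (u n - u (Suc n))\<bar> \<le> 9 * (u n - u (Suc n))"
    proof -
      have a: "\<bar>R n * (u n - u (Suc n))\<bar> = \<bar>R n\<bar> * (u n - u (Suc n))" using uu by (simp add: abs_mult)
      have "\<bar>R n\<bar> * (u n - u (Suc n)) \<le> 9 * (u n - u (Suc n))"
        using R_bound[of n] n uu by (intro mult_right_mono) auto
      then show ?thesis using a by linarith
    qed
    then show "norm (G n) \<le> 9 * (u n - u (Suc n)) + 5 * inverse (real n ^ 2)"
      unfolding G_def using n ee_bounds[OF n] by simp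
  qed
  show "summable (\<lambda>n. 9 * (u n - u (Suc n)) + 5 * inverse (real n ^ 2))"
    by (intro summable_add summable_mult telescope_summable'[OF u_tendsto] inverse_power_summable) auto
qed

lemma recip_decomp:
  assumes "N \<ge> 2"
  shows "recip N - ln (ln (real N)) = T N * u N - ln (ln 2) + (\<Sum>n<N. G n)"
proof -
  have tel: "ln (ln (real N)) - ln (ln 2) = (\<Sum>n\<in>{2..<N}. ln (ln (real (Suc n))) - ln (ln (real n)))"
    using sum_Suc_diff'[OF assms, of "\<lambda>n. ln (ln (real n))"] by simp
  have "(\<Sum>n\<in>{2..<N}. T n * (u (Suc n) - u n)) = (\<Sum>n\<in>{2..<N}. - tt n - R n * (u n - u (Suc n)))"
  proof (intro sum.cong refl)
    fix n assume n: "n \<in> {2..<N}"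
    then have l0: "ln (real n) > 0" and l1: "ln (real (Suc n)) > 0" by auto
    have "ln (real n) * (u (Suc n) - u n) = - tt n"
      unfolding u_def tt_def using l0 l1 by (simp add: field_simps)
    then show "T n * (u (Suc n) - u n) = - tt n - R n * (u n - u (Suc n))"
      unfolding R_def by (simp add: algebra_simps)
  qed
  then have "recip N = T N * u N + (\<Sum>n\<in>{2..<N}. tt n + R n * (u n - u (Suc n)))"
    using recip_abel[OF assms] by (simp add: sum_negf[symmetric] sum_subtractf algebra_simps)
  then have "recip N - ln (ln (real N)) = T N * u N - ln (ln 2) + (\<Sum>n\<in>{2..<N}. R n * (u n - u (Suc n)) - ee n)"
    using tel unfolding ee_def by (simp add: sum_subtractf sum.distrib algebra_simps)
  also have "(\<Sum>n\<in>{2..<N}. R n * (u n - u (Suc n)) - ee n) = (\<Sum>n<N. G n)"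
    unfolding G_def by (intro sum.mono_neutral_cong_left) auto
  finally show ?thesis .
qed

lemma recip_conv: "((\<lambda>N. recip N - ln (ln (real N))) \<longlongrightarrow> 1 - ln (ln 2) + suminf G) sequentially"
proof -
  have Tu: "(\<lambda>N. T N * u N) \<longlonglongrightarrow> 1"
  proof -
    have "(\<lambda>N. 1 + R N * u N) \<longlonglongrightarrow> 1 + 0"
    proof (intro tendsto_add tendsto_const)
      have "(\<lambda>N. R N * u N) \<longlonglongrightarrow> 0"
      proof (rule Lim_null_comparison)
        show "\<forall>\<^sub>F N in sequentially. norm (R N * u N) \<le> 9 * u N"
        proof (rule eventually_sequentiallyI[of 2])
          fix N :: nat assume N: "N \<ge> 2"
          have "u N \<ge> 0" unfolding u_def using N by simp
          then show "norm (R N * u N) \<le> 9 * u N" using R_bound[of N] N by (simp add: abs_mult mult_right_mono)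
        qed
        show "(\<lambda>N. 9 * u N) \<longlonglongrightarrow> 0" using tendsto_mult_right_zero[OF u_tendsto] by simp
      qed
      then show "(\<lambda>N. R N * u N) \<longlonglongrightarrow> 0" .
    qed
    moreover have "eventually (\<lambda>N. 1 + R N * u N = T N * u N) sequentially"
    proof (rule eventually_sequentiallyI[of 2])
      fix N :: nat assume N: "N \<ge> 2"
      then have "ln (real N) > 0" by simp
      then show "1 + R N * u N = T N * u N" unfolding R_def u_def by (simp add: field_simps)
    qed
    ultimately show ?thesis by (simp add: tendsto_cong)
  qed
  have "(\<lambda>N. T N * u N - ln (ln 2) + (\<Sum>n<N. G n)) \<longlonglongrightarrow> 1 - ln (ln 2) + suminf G"
    by (intro tendsto_intros Tu summable_LIMSEQ summable_G)
  moreover have "eventually (\<lambda>N. T N * u N - ln (ln 2) + (\<Sum>n<N. G n) = recip N - ln (ln (real N))) sequentially"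
    by (rule eventually_sequentiallyI[of 2]) (simp add: recip_decomp)
  ultimately show ?thesis by (simp add: tendsto_cong)
qed


definition b :: "nat \<Rightarrow> real" where "b n = (if prime n then - ln (1 - 1 / real n) else 0)"
definition P :: "nat \<Rightarrow> real" where "P N = (\<Sum>n\<in>{1..N}. b n)"
definition r :: "nat \<Rightarrow> real" where "r n = (if prime n then - ln (1 - 1 / real n) - 1 / real n else 0)"

lemma r_bounds: "0 \<le> r n \<and> r n \<le> 2 * inverse (real n ^ 2)"
proof (cases "prime n")
  case False then show ?thesis by (simp add: r_def)
next
  case True
  have n: "real n \<ge> 2" using prime_ge_2_nat[OF True] by simp
  define x where "x = 1 / real n"
  have x: "0 \<le> x" "x \<le> 1/2" unfolding x_def using n by auto
  have lo: "- x - 2 * x^2 \<le> ln (1 - x)" using x by (intro ln_one_minus_pos_lower_bound) auto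
  have up: "ln (1 - x) \<le> - x" using x by (intro ln_one_minus_pos_upper_bound) auto
  have "x^2 = inverse (real n ^ 2)" unfolding x_def by (simp add: power_one_over divide_inverse power_inverse)
  then show ?thesis using lo up True unfolding r_def x_def[symmetric] by auto
qed

lemma summable_r: "summable r"
proof (rule summable_comparison_test)
  show "\<exists>N. \<forall>n\<ge>N. norm (r n) \<le> 2 * inverse (real n ^ 2)"
    using r_bounds by auto
  show "summable (\<lambda>n. 2 * inverse (real n ^ 2))"
    by (intro summable_mult inverse_power_summable) auto
qed

lemma P_minus_recip: "P N - recip N = (\<Sum>n<Suc N. r n)"
proof -
  have "P N - recip N = (\<Sum>n\<in>{1..N}. r n)"
    unfolding P_def recip_def b_def r_def by (subst sum_subtractf[symmetric]) (intro sum.cong refl, auto)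
  also have "\<dots> = (\<Sum>n<Suc N. r n)"
    by (intro sum.mono_neutral_left) (auto simp: r_def dest: prime_gt_0_nat)
  finally show ?thesis .
qed

definition cP :: real where "cP = suminf r + (1 - ln (ln 2) + suminf G)"

lemma P_conv: "(\<lambda>N. P N - ln (ln (real N))) \<longlonglongrightarrow> cP"
proof -
  have a: "(\<lambda>N. \<Sum>n<Suc N. r n) \<longlonglongrightarrow> suminf r"
    using summable_LIMSEQ[OF summable_r] by (rule LIMSEQ_Suc)
  have "(\<lambda>N. (P N - recip N) + (recip N - ln (ln (real N)))) \<longlonglongrightarrow> cP"
    unfolding cP_def P_minus_recip by (intro tendsto_add a recip_conv)
  then show ?thesis by simp
qed

definition kk :: "nat \<Rightarrow> nat" where "kk n = nat \<lfloor>ln (real n)\<rfloor>"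

lemma kk_bounds: "n \<ge> 1 \<Longrightarrow> ln (real n) - 1 < real (kk n) \<and> real (kk n) \<le> ln (real n)"
proof -
  assume n: "n \<ge> 1"
  then have l: "ln (real n) \<ge> 0" by simp
  then have "real (kk n) = of_int \<lfloor>ln (real n)\<rfloor>" unfolding kk_def by simp
  then show ?thesis by linarith
qed

lemma kk_tendsto: "filterlim kk at_top sequentially"
proof (subst filterlim_at_top, intro allI)
  fix Z :: nat
  have "filterlim (\<lambda>n. ln (real n) - 1) at_top sequentially"
    by real_asymp
  then have "eventually (\<lambda>n. ln (real n) - 1 \<ge> real Z) sequentially"
    by (simp add: filterlim_at_top)
  moreover have "eventually (\<lambda>n::nat. n \<ge> 1) sequentially" by (rule eventually_ge_at_top)
  ultimately show "eventually (\<lambda>n. Z \<le> kk n) sequentially"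
  proof eventually_elim
    case (elim n)
    then show ?case using kk_bounds[of n] by linarith
  qed
qed

lemma harm_kk_conv: "(\<lambda>n. harm (kk n) - ln (ln (real n))) \<longlonglongrightarrow> euler_mascheroni"
proof -
  have h: "(\<lambda>n. harm (kk n) - ln (real (kk n)) :: real) \<longlonglongrightarrow> euler_mascheroni"
    using euler_mascheroni_LIMSEQ kk_tendsto by (rule filterlim_compose)
  have q: "(\<lambda>n. real (kk n) / ln (real n)) \<longlonglongrightarrow> 1"
  proof (rule real_tendsto_sandwich)
    show "eventually (\<lambda>n. (ln (real n) - 1) / ln (real n) \<le> real (kk n) / ln (real n)) sequentially"
      using eventually_ge_at_top[of 2]
    proof eventually_elim
      case (elim n)
      then have "ln (real n) - 1 < real (kk n)" using kk_bounds[of n] by auto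
      then show ?case using elim by (intro divide_right_mono) auto
    qed
    show "eventually (\<lambda>n. real (kk n) / ln (real n) \<le> 1) sequentially"
      using eventually_ge_at_top[of 2]
    proof eventually_elim
      case (elim n)
      then have "real (kk n) \<le> ln (real n)" "ln (real n) > 0" using kk_bounds[of n] by auto
      then show ?case by simp
    qed
    show "(\<lambda>n. (ln (real n) - 1) / ln (real n)) \<longlonglongrightarrow> 1" by real_asymp
    show "(\<lambda>n. 1::real) \<longlonglongrightarrow> 1" by simp
  qed
  have "(\<lambda>n. ln (real (kk n) / ln (real n))) \<longlonglongrightarrow> ln 1"
    by (intro tendsto_ln q) simp
  then have l: "(\<lambda>n. ln (real (kk n) / ln (real n))) \<longlonglongrightarrow> 0" by simp
  have "(\<lambda>n. (harm (kk n) - ln (real (kk n))) + ln (real (kk n) / ln (real n))) \<longlonglongrightarrow> euler_mascheroni + 0"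
    by (intro tendsto_add h l)
  moreover have "eventually (\<lambda>n. (harm (kk n) - ln (real (kk n))) + ln (real (kk n) / ln (real n)) = harm (kk n) - ln (ln (real n))) sequentially"
  proof -
    have "eventually (\<lambda>n. kk n \<ge> 1) sequentially" using kk_tendsto by (simp add: filterlim_at_top)
    then show ?thesis using eventually_ge_at_top[of 2]
    proof eventually_elim
      case (elim n)
      then have "ln (real n) > 0" by simp
      then show ?case using elim by (simp add: ln_div)
    qed
  qed
  ultimately show ?thesis by (simp add: tendsto_cong)
qed


lemma abel1:
  fixes f w :: "nat \<Rightarrow> real"
  assumes "f 0 = 0"
  shows "(\<Sum>n\<in>{1..N}. (f n - f (n-1)) * w n) = f N * w N + (\<Sum>n\<in>{1..<N}. f n * (w n - w (Suc n)))"
proof (induction N)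
  case 0 then show ?case using assms by simp
next
  case (Suc N)
  have e1: "{1..Suc N} = insert (Suc N) {1..N}" by auto
  show ?case
  proof (cases "N = 0")
    case True then show ?thesis using assms by simp
  next
    case False
    then have e2: "{1..<Suc N} = insert N {1..<N}" by auto
    show ?thesis unfolding e1 e2 using Suc by (simp add: algebra_simps)
  qed
qed

lemma sum_1_diff:
  fixes g :: "nat \<Rightarrow> real"
  assumes "lo \<le> hi"
  shows "(\<Sum>j\<in>{1..hi}. g j) - (\<Sum>j\<in>{1..lo}. g j) = (\<Sum>j\<in>{lo<..hi}. g j)"
proof -
  have "{1..hi} = {1..lo} \<union> {lo<..hi}" using assms by auto
  moreover have "(\<Sum>j\<in>{1..lo} \<union> {lo<..hi}. g j) = (\<Sum>j\<in>{1..lo}. g j) + (\<Sum>j\<in>{lo<..hi}. g j)"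
    by (rule sum.union_disjoint) auto
  ultimately show ?thesis by simp
qed

lemma kk_mono: "m \<le> n \<Longrightarrow> kk m \<le> kk n"
  unfolding kk_def
proof -
  assume "m \<le> n"
  then show "nat \<lfloor>ln (real m)\<rfloor> \<le> nat \<lfloor>ln (real n)\<rfloor>"
  proof (cases "m = 0")
    case True then show ?thesis by simp
  next
    case False
    then have "ln (real m) \<le> ln (real n)" using \<open>m \<le> n\<close> by simp
    then show ?thesis by (intro nat_mono floor_mono)
  qed
qed

lemma kk_0 [simp]: "kk 0 = 0" and kk_1 [simp]: "kk (Suc 0) = 0" by (simp_all add: kk_def)

lemma telescope_1:
  fixes g :: "nat \<Rightarrow> real"
  assumes "g 0 = 0"
  shows "(\<Sum>n\<in>{1..N}. g n - g (n-1)) = g N"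
proof (induction N)
  case 0 then show ?case using assms by simp
next
  case (Suc N)
  have "{1..Suc N} = insert (Suc N) {1..N}" by auto
  then show ?case using Suc by simp
qed

definition Lf :: "real \<Rightarrow> nat \<Rightarrow> real" where "Lf \<sigma> m = (\<Sum>j\<in>{1..m}. inverse (real j) * exp (-\<sigma>) ^ j)"

lemma w_upper:
  assumes "\<sigma> > 0" "n \<ge> 1" "real j \<le> ln (real n)"
  shows "real n powr (-\<sigma>) \<le> exp (-\<sigma>) ^ j"
proof -
  have "real n powr (-\<sigma>) = exp (-\<sigma> * ln (real n))" using assms by (simp add: powr_def)
  also have "\<dots> \<le> exp (-\<sigma> * real j)" using assms by (simp add: mult_left_mono)
  also have "\<dots> = exp (-\<sigma>) ^ j" by (simp add: exp_of_nat_mult[symmetric] mult.commute)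
  finally show ?thesis .
qed

lemma w_lower:
  assumes "\<sigma> > 0" "n \<ge> 2" "ln (real (n - 1)) < real j"
  shows "real n powr (-\<sigma>) \<ge> 2 powr (-\<sigma>) * exp (-\<sigma>) ^ j"
proof -
  have "real (n-1) < exp (real j)" using assms
    by (metis exp_less_cancel_iff exp_ln of_nat_0_less_iff zero_less_diff Suc_1 Suc_le_eq)
  then have "real n < exp (real j) + 1" using assms by (simp add: of_nat_diff)
  also have "\<dots> \<le> 2 * exp (real j)" using one_le_exp_iff[of "real j"] by simp
  finally have "ln (real n) \<le> ln (2 * exp (real j))" using assms by (subst ln_le_cancel_iff) auto
  also have "\<dots> = ln 2 + real j" by (simp add: ln_mult)
  finally have l: "ln (real n) \<le> ln 2 + real j" .
  have "2 powr (-\<sigma>) * exp (-\<sigma>) ^ j = exp (-\<sigma> * (ln 2 + real j))"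
    by (simp add: powr_def exp_of_nat_mult[symmetric] exp_add[symmetric] algebra_simps)
  also have "\<dots> \<le> exp (-\<sigma> * ln (real n))" using assms l by (simp add: mult_left_mono)
  also have "\<dots> = real n powr (-\<sigma>)" using assms by (simp add: powr_def)
  finally show ?thesis .
qed

lemma harm_diff: "lo \<le> hi \<Longrightarrow> harm hi - harm lo = (\<Sum>j\<in>{lo<..hi}. inverse (real j))"
  unfolding harm_def by (rule sum_1_diff)

lemma Hpart_bounds:
  assumes s: "\<sigma> > 0"
  shows "(\<Sum>n\<in>{1..N}. (harm (kk n) - harm (kk (n-1))) * real n powr (-\<sigma>)) \<le> Lf \<sigma> (kk N)"
        "2 powr (-\<sigma>) * Lf \<sigma> (kk N) \<le> (\<Sum>n\<in>{1..N}. (harm (kk n) - harm (kk (n-1))) * real n powr (-\<sigma>))"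
proof -
  define x where "x = exp (-\<sigma>)"
  have Ld: "Lf \<sigma> (kk n) - Lf \<sigma> (kk (n-1)) = (\<Sum>j\<in>{kk (n-1)<..kk n}. inverse (real j) * x ^ j)" for n
    unfolding Lf_def x_def by (rule sum_1_diff) (rule kk_mono, simp)
  have Hd: "harm (kk n) - harm (kk (n-1)) = (\<Sum>j\<in>{kk (n-1)<..kk n}. inverse (real j))" for n
    by (rule harm_diff) (rule kk_mono, simp)
  have tel: "(\<Sum>n\<in>{1..N}. Lf \<sigma> (kk n) - Lf \<sigma> (kk (n-1))) = Lf \<sigma> (kk N)"
    by (rule telescope_1[where g = "\<lambda>n. Lf \<sigma> (kk n)"]) (simp add: Lf_def)
  have up: "(harm (kk n) - harm (kk (n-1))) * real n powr (-\<sigma>) \<le> Lf \<sigma> (kk n) - Lf \<sigma> (kk (n-1))"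
    if n: "n \<in> {1..N}" for n
    unfolding Hd Ld sum_distrib_right
  proof (intro sum_mono mult_left_mono)
    fix j assume j: "j \<in> {kk (n-1)<..kk n}"
    then have "real j \<le> real (kk n)" by simp
    also have "\<dots> \<le> ln (real n)" using kk_bounds[of n] n by auto
    finally show "real n powr (-\<sigma>) \<le> x ^ j" unfolding x_def using s n by (intro w_upper) auto
  qed auto
  have lo: "2 powr (-\<sigma>) * (Lf \<sigma> (kk n) - Lf \<sigma> (kk (n-1))) \<le> (harm (kk n) - harm (kk (n-1))) * real n powr (-\<sigma>)"
    if n: "n \<in> {1..N}" for n
  proof (cases "n = 1")
    case True then show ?thesis by simp
  next
    case False
    then have n2: "n \<ge> 2" using n by auto
    show ?thesis unfolding Hd Ld sum_distrib_right sum_distrib_left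
    proof (intro sum_mono)
      fix j assume j: "j \<in> {kk (n-1)<..kk n}"
      have "ln (real (n-1)) < real j"
      proof -
        have "n - 1 \<ge> 1" using n2 by simp
        then have "ln (real (n-1)) \<ge> 0" by simp
        moreover have "kk (n-1) < j" using j by simp
        ultimately show ?thesis unfolding kk_def by linarith
      qed
      then have "2 powr (-\<sigma>) * x ^ j \<le> real n powr (-\<sigma>)" unfolding x_def using s n2 by (intro w_lower) auto
      then show "2 powr (-\<sigma>) * (inverse (real j) * x ^ j) \<le> inverse (real j) * real n powr (-\<sigma>)"
        by (simp add: mult_left_mono mult.left_commute)
    qed
  qed
  show "(\<Sum>n\<in>{1..N}. (harm (kk n) - harm (kk (n-1))) * real n powr (-\<sigma>)) \<le> Lf \<sigma> (kk N)"
    unfolding tel[symmetric] by (intro sum_mono up)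
  have "2 powr (-\<sigma>) * Lf \<sigma> (kk N) = (\<Sum>n\<in>{1..N}. 2 powr (-\<sigma>) * (Lf \<sigma> (kk n) - Lf \<sigma> (kk (n-1))))"
    unfolding tel[symmetric] sum_distrib_left ..
  also have "\<dots> \<le> (\<Sum>n\<in>{1..N}. (harm (kk n) - harm (kk (n-1))) * real n powr (-\<sigma>))"
    by (intro sum_mono lo)
  finally show "2 powr (-\<sigma>) * Lf \<sigma> (kk N) \<le> (\<Sum>n\<in>{1..N}. (harm (kk n) - harm (kk (n-1))) * real n powr (-\<sigma>))" .
qed

lemma Lf_tendsto:
  assumes s: "\<sigma> > 0"
  shows "(\<lambda>N. Lf \<sigma> (kk N)) \<longlonglongrightarrow> - ln (1 - exp (-\<sigma>))"
proof -
  define x where "x = exp (-\<sigma>)"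
  have x: "0 < x" "x < 1" unfolding x_def using s by auto
  have "(\<lambda>n. - ((- (-x)) ^ n) / real n) sums ln (1 + (-x))"
    using x by (intro ln_series') auto
  then have "(\<lambda>n. - (- (x ^ n) / real n)) sums (- ln (1 - x))"
    by (intro sums_minus) simp
  then have "(\<lambda>n. x ^ n / real n) sums (- ln (1 - x))" by simp
  then have a: "(\<lambda>K. \<Sum>n<K. x ^ n / real n) \<longlonglongrightarrow> - ln (1 - x)" by (simp add: sums_def)
  have "(\<lambda>K. \<Sum>n<Suc K. x ^ n / real n) \<longlonglongrightarrow> - ln (1 - x)" using LIMSEQ_Suc[OF a] .
  moreover have "(\<Sum>n<Suc K. x ^ n / real n) = Lf \<sigma> K" for K
  proof -
    have "(\<Sum>n<Suc K. x ^ n / real n) = (\<Sum>n\<in>{1..K}. x ^ n / real n)"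
      by (intro sum.mono_neutral_right) auto
    then show ?thesis unfolding Lf_def x_def by (simp add: divide_inverse mult.commute)
  qed
  ultimately have "(\<lambda>K. Lf \<sigma> K) \<longlonglongrightarrow> - ln (1 - x)" by simp
  then show ?thesis unfolding x_def using kk_tendsto by (rule filterlim_compose)
qed


definition eta :: "nat \<Rightarrow> real" where "eta n = P n - harm (kk n)"

lemma eta_0: "eta 0 = 0" by (simp add: eta_def P_def harm_def)

lemma b_eq: "n \<ge> 1 \<Longrightarrow> b n = P n - P (n-1)"
proof -
  assume n: "n \<ge> 1"
  have "{1..n} = insert n {1..n-1}" using n by auto
  then show ?thesis unfolding P_def using n by simp
qed

lemma A_decomp:
  "(\<Sum>n\<in>{1..N}. b n * w n) = (\<Sum>n\<in>{1..N}. (harm (kk n) - harm (kk (n-1))) * w n) + (\<Sum>n\<in>{1..N}. (eta n - eta (n-1)) * w n)"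
  unfolding sum.distrib[symmetric]
  by (intro sum.cong refl) (auto simp: b_eq eta_def algebra_simps)

lemma eta_conv: "eta \<longlonglongrightarrow> cP - euler_mascheroni"
proof -
  have "(\<lambda>n. (P n - ln (ln (real n))) - (harm (kk n) - ln (ln (real n)))) \<longlonglongrightarrow> cP - euler_mascheroni"
    by (intro tendsto_diff P_conv harm_kk_conv)
  then show ?thesis unfolding eta_def by simp
qed

lemma w_mono: "\<sigma> > 0 \<Longrightarrow> n \<ge> 1 \<Longrightarrow> real (Suc n) powr (-\<sigma>) \<le> real n powr (-\<sigma>)"
  by (intro powr_mono2') auto

lemma eta_part:
  fixes d \<epsilon> B :: real
  assumes s: "\<sigma> > 0" and e: "\<epsilon> \<ge> 0" and B: "B \<ge> 0" and n0: "n0 \<ge> 1" "N \<ge> n0"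
    and bnd: "\<And>n. \<bar>eta n - d\<bar> \<le> \<epsilon> + (if n < n0 then B else 0)"
  shows "\<bar>(\<Sum>n\<in>{1..N}. (eta n - eta (n-1)) * real n powr (-\<sigma>)) - d\<bar> \<le> \<epsilon> + B * (1 - real n0 powr (-\<sigma>))"
proof -
  define w where "w n = real n powr (-\<sigma>)" for n
  define dw where "dw n = w n - w (Suc n)" for n
  have dw0: "dw n \<ge> 0" if "n \<ge> 1" for n unfolding dw_def w_def using w_mono[OF s that] by simp
  have w0: "w n \<ge> 0" for n unfolding w_def by simp
  have w1: "w 1 = 1" unfolding w_def by simp
  have tel: "(\<Sum>n\<in>{1..<M}. dw n) = 1 - w M" if "M \<ge> 1" for M
  proof -
    have "(\<Sum>n\<in>{1..<M}. dw n) = - (\<Sum>n\<in>{1..<M}. w (Suc n) - w n)"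
      unfolding dw_def by (simp add: sum_negf[symmetric])
    also have "\<dots> = - (w M - w 1)" using that by (subst sum_Suc_diff') auto
    finally show ?thesis using w1 by simp
  qed
  have N1: "N \<ge> 1" using n0 by simp
  have "(\<Sum>n\<in>{1..N}. (eta n - eta (n-1)) * w n) = eta N * w N + (\<Sum>n\<in>{1..<N}. eta n * dw n)"
    unfolding dw_def by (rule abel1) (rule eta_0)
  moreover have "d = d * w N + (\<Sum>n\<in>{1..<N}. d * dw n)"
  proof -
    have h: "w N + (\<Sum>n\<in>{1..<N}. dw n) = 1" using tel[OF N1] by simp
    have "d = d * (w N + (\<Sum>n\<in>{1..<N}. dw n))" unfolding h by simp
    then show ?thesis by (simp add: distrib_left sum_distrib_left)
  qed
  ultimately have eq: "(\<Sum>n\<in>{1..N}. (eta n - eta (n-1)) * w n) - d = (eta N - d) * w N + (\<Sum>n\<in>{1..<N}. (eta n - d) * dw n)"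
    by (simp add: sum_subtractf algebra_simps)
  have "\<bar>(eta N - d) * w N\<bar> \<le> \<epsilon> * w N"
    using bnd[of N] n0 w0[of N] by (simp add: abs_mult mult_right_mono)
  moreover have "\<bar>\<Sum>n\<in>{1..<N}. (eta n - d) * dw n\<bar> \<le> (\<Sum>n\<in>{1..<N}. (\<epsilon> + (if n < n0 then B else 0)) * dw n)"
  proof -
    have "\<bar>\<Sum>n\<in>{1..<N}. (eta n - d) * dw n\<bar> \<le> (\<Sum>n\<in>{1..<N}. \<bar>(eta n - d) * dw n\<bar>)" by (rule sum_abs)
    also have "\<dots> \<le> (\<Sum>n\<in>{1..<N}. (\<epsilon> + (if n < n0 then B else 0)) * dw n)"
    proof (intro sum_mono)
      fix n assume "n \<in> {1..<N}"
      then have "dw n \<ge> 0" using dw0 by auto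
      then show "\<bar>(eta n - d) * dw n\<bar> \<le> (\<epsilon> + (if n < n0 then B else 0)) * dw n"
        using bnd[of n] by (simp add: abs_mult mult_right_mono)
    qed
    finally show ?thesis .
  qed
  moreover have "(\<Sum>n\<in>{1..<N}. (\<epsilon> + (if n < n0 then B else 0)) * dw n) = \<epsilon> * (1 - w N) + B * (1 - w n0)"
  proof -
    have s1: "(\<Sum>n\<in>{1..<N}. (\<epsilon> + (if n < n0 then B else 0)) * dw n) = (\<Sum>n\<in>{1..<N}. \<epsilon> * dw n) + (\<Sum>n\<in>{1..<N}. if n < n0 then B * dw n else 0)"
      by (subst sum.distrib[symmetric]) (intro sum.cong refl, auto simp: algebra_simps)
    have s2: "(\<Sum>n\<in>{1..<N}. \<epsilon> * dw n) = \<epsilon> * (1 - w N)"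
      using tel[OF N1] by (simp add: sum_distrib_left[symmetric])
    have s3: "(\<Sum>n\<in>{1..<N}. if n < n0 then B * dw n else 0) = (\<Sum>n\<in>{1..<n0}. B * dw n)"
      using n0 by (intro sum.mono_neutral_cong_right) auto
    have s4: "(\<Sum>n\<in>{1..<n0}. B * dw n) = B * (1 - w n0)"
      using tel[OF n0(1)] by (simp add: sum_distrib_left[symmetric])
    show ?thesis using s1 s2 s3 s4 by simp
  qed
  ultimately have "\<bar>(\<Sum>n\<in>{1..N}. (eta n - eta (n-1)) * w n) - d\<bar> \<le> \<epsilon> * w N + (\<epsilon> * (1 - w N) + B * (1 - w n0))"
    unfolding eq by (smt (verit) abs_triangle_ineq)
  then show ?thesis unfolding w_def by (simp add: algebra_simps)
qed

lemma compare_sum: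
  assumes s: "\<sigma> > 0"
  shows "\<bar>(\<Sum>n\<in>{1..N}. b n * real n powr (-\<sigma>)) - (\<Sum>p\<in>{p. prime p \<and> p \<le> N}. - ln (1 - real p powr (-(1+\<sigma>))))\<bar> \<le> 16 * \<sigma>"
proof -
  let ?A = "{p. prime p \<and> p \<le> N}"
  have e: "(\<Sum>n\<in>{1..N}. b n * real n powr (-\<sigma>)) = (\<Sum>p\<in>?A. (- ln (1 - 1 / real p)) * real p powr (-\<sigma>))"
  proof -
    have "(\<Sum>n\<in>{1..N}. b n * real n powr (-\<sigma>)) = (\<Sum>n\<in>{1..N}. if prime n then (- ln (1 - 1 / real n)) * real n powr (-\<sigma>) else 0)"
      unfolding b_def by (intro sum.cong refl) auto
    also have "\<dots> = (\<Sum>n\<in>{n\<in>{1..N}. prime n}. (- ln (1 - 1 / real n)) * real n powr (-\<sigma>))"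
      by (rule sum.inter_filter[symmetric]) auto
    also have "{n\<in>{1..N}. prime n} = ?A" using prime_ge_1_nat by auto
    finally show ?thesis .
  qed
  have "\<bar>(\<Sum>p\<in>?A. (- ln (1 - 1 / real p)) * real p powr (-\<sigma>)) - (\<Sum>p\<in>?A. - ln (1 - real p powr (-(1+\<sigma>))))\<bar>
        \<le> (\<Sum>p\<in>?A. \<bar>(- ln (1 - 1 / real p)) * real p powr (-\<sigma>) - (- ln (1 - real p powr (-(1+\<sigma>))))\<bar>)"
    unfolding sum_subtractf[symmetric] by (rule sum_abs)
  also have "\<dots> \<le> (\<Sum>p\<in>?A. 2 * \<sigma> * ln (real p) / real p ^ 2)"
    using compare_prime s by (intro sum_mono) auto
  also have "\<dots> \<le> (\<Sum>p\<in>?A. 2 * \<sigma> * (ln (real p) / (real p * (real p - 1))))"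
  proof (intro sum_mono)
    fix p assume "p \<in> ?A"
    then have p2: "real p \<ge> 2" using prime_ge_2_nat by auto
    have "ln (real p) / real p ^ 2 \<le> ln (real p) / (real p * (real p - 1))"
      using p2 by (intro divide_left_mono) (auto simp: power2_eq_square)
    then show "2 * \<sigma> * ln (real p) / real p ^ 2 \<le> 2 * \<sigma> * (ln (real p) / (real p * (real p - 1)))"
      using s by (simp add: mult_left_mono divide_inverse mult.assoc)
  qed
  also have "\<dots> = 2 * \<sigma> * (\<Sum>p\<in>?A. ln (real p) / (real p * (real p - 1)))" by (simp add: sum_distrib_left)
  also have "(\<Sum>p\<in>?A. ln (real p) / (real p * (real p - 1))) \<le> (\<Sum>m\<in>{2..N}. ln (real m) / (real m * (real m - 1)))"
  proof (intro sum_mono2)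
    show "?A \<subseteq> {2..N}" using prime_ge_2_nat by auto
    fix m assume "m \<in> {2..N} - ?A"
    then show "0 \<le> ln (real m) / (real m * (real m - 1))" by auto
  qed auto
  also have "\<dots> \<le> 8" by (rule sum_ln_bound)
  finally show ?thesis unfolding e using s by (simp add: mult_left_mono)
qed


lemma fixed_sigma_bounds:
  fixes d \<epsilon> B :: real
  assumes s: "\<sigma> > 0" and e: "\<epsilon> \<ge> 0" and B: "B \<ge> 0" and n0: "n0 \<ge> 1"
    and bnd: "\<And>n. \<bar>eta n - d\<bar> \<le> \<epsilon> + (if n < n0 then B else 0)"
  shows "2 powr (-\<sigma>) * (- ln (1 - exp (-\<sigma>))) + d - \<epsilon> - (B * (1 - real n0 powr (-\<sigma>)) + 16 * \<sigma>) \<le> ln (1 + 1 / \<sigma>)"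
    and "ln (1 / \<sigma>) \<le> (- ln (1 - exp (-\<sigma>))) + d + \<epsilon> + (B * (1 - real n0 powr (-\<sigma>)) + 16 * \<sigma>)"
proof -
  define U where "U = B * (1 - real n0 powr (-\<sigma>)) + 16 * \<sigma>"
  define E where "E N = (\<Sum>p\<in>{p. prime p \<and> p \<le> N}. - ln (1 - real p powr (-(1+\<sigma>))))" for N
  define Hp where "Hp N = (\<Sum>n\<in>{1..N}. (harm (kk n) - harm (kk (n-1))) * real n powr (-\<sigma>))" for N
  define Ep where "Ep N = (\<Sum>n\<in>{1..N}. (eta n - eta (n-1)) * real n powr (-\<sigma>))" for N
  define A where "A N = (\<Sum>n\<in>{1..N}. b n * real n powr (-\<sigma>))" for N
  have facts: "A N = Hp N + Ep N" "\<bar>Ep N - d\<bar> \<le> \<epsilon> + B * (1 - real n0 powr (-\<sigma>))"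
     "\<bar>A N - E N\<bar> \<le> 16 * \<sigma>" "E N \<le> ln (1 + 1 / \<sigma>)"
     "2 powr (-\<sigma>) * Lf \<sigma> (kk N) \<le> Hp N" "Hp N \<le> Lf \<sigma> (kk N)"
     "ln ((1 - real (Suc N) powr (-\<sigma>)) / \<sigma>) \<le> E N"
    if N: "N \<ge> n0" for N
  proof -
    show "A N = Hp N + Ep N" unfolding A_def Hp_def Ep_def by (rule A_decomp)
    show "\<bar>Ep N - d\<bar> \<le> \<epsilon> + B * (1 - real n0 powr (-\<sigma>))" unfolding Ep_def
      using s e B n0 N bnd by (intro eta_part) auto
    show "\<bar>A N - E N\<bar> \<le> 16 * \<sigma>" unfolding A_def E_def using s by (rule compare_sum)
    show "E N \<le> ln (1 + 1 / \<sigma>)" unfolding E_def using s by (intro euler_upper) auto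
    show "2 powr (-\<sigma>) * Lf \<sigma> (kk N) \<le> Hp N" "Hp N \<le> Lf \<sigma> (kk N)"
      unfolding Hp_def using Hpart_bounds[OF s] by auto
    have N1: "N \<ge> 1" using N n0 by simp
    have pos: "0 < (1 - real (Suc N) powr (-\<sigma>)) / \<sigma>"
      using s powr_less_one[of "real (Suc N)" "-\<sigma>"] N1 by auto
    have "ln ((1 - real (Suc N) powr (-\<sigma>)) / \<sigma>) \<le> ln (\<Sum>n\<in>{1..N}. real n powr (-(1+\<sigma>)))"
      using pos zeta_lower[OF s, of N] by (subst ln_le_cancel_iff) auto
    also have "\<dots> \<le> E N" unfolding E_def using s N1 by (intro euler_lower) auto
    finally show "ln ((1 - real (Suc N) powr (-\<sigma>)) / \<sigma>) \<le> E N" .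
  qed
  have Lt: "(\<lambda>N. Lf \<sigma> (kk N)) \<longlonglongrightarrow> - ln (1 - exp (-\<sigma>))" by (rule Lf_tendsto[OF s])
  have "(\<lambda>N. 2 powr (-\<sigma>) * Lf \<sigma> (kk N) + d - \<epsilon> - U) \<longlonglongrightarrow> 2 powr (-\<sigma>) * (- ln (1 - exp (-\<sigma>))) + d - \<epsilon> - U"
    by (intro tendsto_intros Lt)
  moreover have "\<exists>N0. \<forall>N\<ge>N0. 2 powr (-\<sigma>) * Lf \<sigma> (kk N) + d - \<epsilon> - U \<le> ln (1 + 1 / \<sigma>)"
  proof (intro exI allI impI)
    fix N assume N: "N \<ge> n0"
    note f = facts[OF N]
    show "2 powr (-\<sigma>) * Lf \<sigma> (kk N) + d - \<epsilon> - U \<le> ln (1 + 1 / \<sigma>)"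
      using f unfolding U_def by linarith
  qed
  ultimately show "2 powr (-\<sigma>) * (- ln (1 - exp (-\<sigma>))) + d - \<epsilon> - (B * (1 - real n0 powr (-\<sigma>)) + 16 * \<sigma>) \<le> ln (1 + 1 / \<sigma>)"
    unfolding U_def by (rule LIMSEQ_le_const2)
  have l1: "(\<lambda>N. ln ((1 - real (Suc N) powr (-\<sigma>)) / \<sigma>)) \<longlonglongrightarrow> ln ((1 - 0) / \<sigma>)"
  proof (intro tendsto_intros)
    show "(\<lambda>N. real (Suc N) powr (-\<sigma>)) \<longlonglongrightarrow> 0"
      using s by (intro tendsto_neg_powr filterlim_compose[OF filterlim_real_sequentially] filterlim_Suc) auto
    show "(1 - 0) / \<sigma> \<noteq> 0" using s by simp
  qed (use s in auto)
  have l2: "(\<lambda>N. Lf \<sigma> (kk N) + d + \<epsilon> + U) \<longlonglongrightarrow> (- ln (1 - exp (-\<sigma>))) + d + \<epsilon> + U"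
    by (intro tendsto_intros Lt)
  have "ln ((1 - 0) / \<sigma>) \<le> (- ln (1 - exp (-\<sigma>))) + d + \<epsilon> + U"
  proof (rule LIMSEQ_le[OF l1 l2])
    show "\<exists>N0. \<forall>N\<ge>N0. ln ((1 - real (Suc N) powr (-\<sigma>)) / \<sigma>) \<le> Lf \<sigma> (kk N) + d + \<epsilon> + U"
    proof (intro exI allI impI)
      fix N assume N: "N \<ge> n0"
      note f = facts[OF N]
      show "ln ((1 - real (Suc N) powr (-\<sigma>)) / \<sigma>) \<le> Lf \<sigma> (kk N) + d + \<epsilon> + U"
        using f unfolding U_def by linarith
    qed
  qed
  then show "ln (1 / \<sigma>) \<le> (- ln (1 - exp (-\<sigma>))) + d + \<epsilon> + (B * (1 - real n0 powr (-\<sigma>)) + 16 * \<sigma>)"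
    unfolding U_def by simp
qed

theorem cP_eq: "cP = euler_mascheroni"
proof -
  define d where "d = cP - euler_mascheroni"
  have conv: "eta \<longlonglongrightarrow> d" unfolding d_def by (rule eta_conv)
  have c0: "(\<lambda>n. eta n - d) \<longlonglongrightarrow> 0" using tendsto_diff[OF conv tendsto_const[of d]] by simp
  have "Bseq (\<lambda>n. eta n - d)" using c0 unfolding convergent_def by (intro convergent_imp_Bseq) (auto simp: convergent_def)
  then obtain B where B: "B > 0" "\<And>n. norm (eta n - d) \<le> B" by (auto elim: BseqE)
  have key: "\<bar>d\<bar> \<le> \<epsilon>" if e: "\<epsilon> > 0" for \<epsilon>
  proof -
    obtain n1 where n1: "\<And>n. n \<ge> n1 \<Longrightarrow> norm (eta n - d) < \<epsilon>"
      using LIMSEQ_D[OF conv e] by blast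
    define n0 where "n0 = max n1 1"
    have n0: "n0 \<ge> 1" unfolding n0_def by simp
    have bnd: "\<bar>eta n - d\<bar> \<le> \<epsilon> + (if n < n0 then B else 0)" for n
    proof (cases "n < n0")
      case True then show ?thesis using B(2)[of n] e by simp
    next
      case False then have "n \<ge> n1" unfolding n0_def by simp
      then show ?thesis using n1[of n] False by simp
    qed
    define U where "U \<sigma> = B * (1 - real n0 powr (-\<sigma>)) + 16 * \<sigma>" for \<sigma> :: real
    have U: "(U \<longlongrightarrow> 0) (at_right 0)"
    proof -
      have "((\<lambda>\<sigma>::real. B * (1 - real n0 powr (-\<sigma>)) + 16 * \<sigma>) \<longlongrightarrow> B * (1 - real n0 powr (-0)) + 16 * 0) (at_right 0)"
        using n0 by (intro tendsto_intros) auto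
      then show ?thesis unfolding U_def using n0 by simp
    qed
    have ev: "eventually (\<lambda>\<sigma>::real. \<sigma> > 0) (at_right 0)" by (simp add: eventually_at_right_less)
    have a1: "((\<lambda>\<sigma>::real. ln (1 + 1/\<sigma>) - 2 powr (-\<sigma>) * (- ln (1 - exp (-\<sigma>)))) \<longlongrightarrow> 0) (at_right 0)"
      by real_asymp
    have a2: "((\<lambda>\<sigma>::real. ln (1/\<sigma>) + ln (1 - exp (-\<sigma>))) \<longlongrightarrow> 0) (at_right 0)"
      by real_asymp
    have up: "d - \<epsilon> \<le> 0"
    proof (rule tendsto_le[OF _ _ tendsto_const])
      show "((\<lambda>\<sigma>. U \<sigma> + (ln (1 + 1/\<sigma>) - 2 powr (-\<sigma>) * (- ln (1 - exp (-\<sigma>))))) \<longlongrightarrow> 0) (at_right 0)"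
        using tendsto_add[OF U a1] by simp
      show "eventually (\<lambda>\<sigma>. d - \<epsilon> \<le> U \<sigma> + (ln (1 + 1/\<sigma>) - 2 powr (-\<sigma>) * (- ln (1 - exp (-\<sigma>))))) (at_right 0)"
        using ev
      proof eventually_elim
        case (elim \<sigma>)
        show ?case using fixed_sigma_bounds(1)[OF elim _ _ n0 bnd] e B unfolding U_def by auto
      qed
    qed simp
    have lo: "0 \<le> d + \<epsilon>"
    proof (rule tendsto_le[OF _ tendsto_const])
      show "((\<lambda>\<sigma>. (ln (1/\<sigma>) + ln (1 - exp (-\<sigma>))) - U \<sigma>) \<longlongrightarrow> 0) (at_right 0)"
        using tendsto_diff[OF a2 U] by simp
      show "eventually (\<lambda>\<sigma>. (ln (1/\<sigma>) + ln (1 - exp (-\<sigma>))) - U \<sigma> \<le> d + \<epsilon>) (at_right 0)"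
        using ev
      proof eventually_elim
        case (elim \<sigma>)
        show ?case using fixed_sigma_bounds(2)[OF elim _ _ n0 bnd] e B unfolding U_def by auto
      qed
    qed simp
    show ?thesis using up lo by linarith
  qed
  have "d = 0"
  proof (rule ccontr)
    assume "d \<noteq> 0"
    then have "\<bar>d\<bar> / 2 > 0" by simp
    from key[OF this] \<open>d \<noteq> 0\<close> show False by linarith
  qed
  then show ?thesis unfolding d_def by simp
qed


definition prodf :: "nat \<Rightarrow> real" where
  "prodf N = (\<Prod>p\<in>{p. prime p \<and> p \<le> N}. real p / (real p - 1))"

lemma exp_P: "exp (P N) = prodf N"
proof -
  let ?A = "{p. prime p \<and> p \<le> N}"
  have "P N = (\<Sum>n\<in>{n\<in>{1..N}. prime n}. - ln (1 - 1 / real n))"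
    unfolding P_def b_def by (subst sum.inter_filter) auto
  also have "{n\<in>{1..N}. prime n} = ?A" using prime_ge_1_nat by auto
  also have "(\<Sum>n\<in>?A. - ln (1 - 1 / real n)) = (\<Sum>p\<in>?A. ln (real p / (real p - 1)))"
  proof (intro sum.cong refl)
    fix p assume "p \<in> ?A"
    then have p2: "real p \<ge> 2" using prime_ge_2_nat by auto
    have "1 - 1 / real p = (real p - 1) / real p" using p2 by (simp add: field_simps)
    then have "ln (1 - 1 / real p) = ln (real p - 1) - ln (real p)" using p2 by (simp add: ln_div)
    moreover have "ln (real p / (real p - 1)) = ln (real p) - ln (real p - 1)" using p2 by (simp add: ln_div)
    ultimately show "- ln (1 - 1 / real p) = ln (real p / (real p - 1))" by simp
  qed
  finally have "exp (P N) = (\<Prod>p\<in>?A. exp (ln (real p / (real p - 1))))" by (simp add: exp_sum)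
  also have "\<dots> = prodf N" unfolding prodf_def
  proof (intro prod.cong refl)
    fix p assume "p \<in> ?A"
    then have p2: "real p \<ge> 2" using prime_ge_2_nat by auto
    then show "exp (ln (real p / (real p - 1))) = real p / (real p - 1)" by simp
  qed
  finally show ?thesis .
qed

lemma prodf_pos: "prodf N > 0"
  unfolding prodf_def by (intro prod_pos) (auto dest: prime_ge_2_nat)

lemma prodf_mono: "M \<le> N \<Longrightarrow> prodf M \<le> prodf N"
  unfolding prodf_def
proof (intro prod_mono2)
  show "finite {p. prime p \<and> p \<le> N}" by auto
  assume "M \<le> N"
  then show "{p. prime p \<and> p \<le> M} \<subseteq> {p. prime p \<and> p \<le> N}" by auto
  fix p assume "p \<in> {p. prime p \<and> p \<le> N} - {p. prime p \<and> p \<le> M}"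
  then have p2: "real p \<ge> 2" using prime_ge_2_nat by auto
  then show "1 \<le> real p / (real p - 1)" by simp
next
  fix p assume "p \<in> {p. prime p \<and> p \<le> M}"
  then have p2: "real p \<ge> 2" using prime_ge_2_nat by auto
  then show "0 \<le> real p / (real p - 1)" by simp
qed

lemma mertens3: "(\<lambda>N. prodf N / ln (real N)) \<longlonglongrightarrow> exp euler_mascheroni"
proof -
  have "(\<lambda>N. exp (P N - ln (ln (real N)))) \<longlonglongrightarrow> exp euler_mascheroni"
    using P_conv cP_eq by (intro tendsto_exp) simp
  moreover have "eventually (\<lambda>N. exp (P N - ln (ln (real N))) = prodf N / ln (real N)) sequentially"
  proof (rule eventually_sequentiallyI[of 2])
    fix N :: nat assume "N \<ge> 2"
    then have "ln (real N) > 0" by simp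
    then show "exp (P N - ln (ln (real N))) = prodf N / ln (real N)" by (simp add: exp_diff exp_P)
  qed
  ultimately show ?thesis by (simp add: tendsto_cong)
qed

lemma natfloor_tendsto: "filterlim (\<lambda>y::real. nat \<lfloor>y\<rfloor>) sequentially at_top"
proof (subst filterlim_at_top, intro allI)
  fix Z :: nat
  show "eventually (\<lambda>y::real. Z \<le> nat \<lfloor>y\<rfloor>) at_top"
    using eventually_ge_at_top[of "real Z"] by eventually_elim (simp add: le_nat_floor)
qed

lemma mertens3_real: "((\<lambda>y. prodf (nat \<lfloor>y\<rfloor>) / ln y) \<longlongrightarrow> exp euler_mascheroni) at_top"
proof -
  have a: "((\<lambda>y::real. prodf (nat \<lfloor>y\<rfloor>) / ln (real (nat \<lfloor>y\<rfloor>))) \<longlongrightarrow> exp euler_mascheroni) at_top"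
    using filterlim_compose[OF mertens3 natfloor_tendsto] by simp
  have q: "((\<lambda>y. ln (real (nat \<lfloor>y\<rfloor>)) / ln y) \<longlongrightarrow> 1) at_top"
  proof (rule real_tendsto_sandwich)
    show "eventually (\<lambda>y. ln (y - 1) / ln y \<le> ln (real (nat \<lfloor>y\<rfloor>)) / ln y) at_top"
      using eventually_ge_at_top[of "3::real"]
    proof eventually_elim
      case (elim y)
      have "y - 1 \<le> real (nat \<lfloor>y\<rfloor>)" using elim by linarith
      then have "ln (y - 1) \<le> ln (real (nat \<lfloor>y\<rfloor>))" using elim by (subst ln_le_cancel_iff) auto
      then show ?case using elim by (intro divide_right_mono) auto
    qed
    show "eventually (\<lambda>y. ln (real (nat \<lfloor>y\<rfloor>)) / ln y \<le> 1) at_top"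
      using eventually_ge_at_top[of "3::real"]
    proof eventually_elim
      case (elim y)
      have "real (nat \<lfloor>y\<rfloor>) \<le> y" "real (nat \<lfloor>y\<rfloor>) > 0" using elim by linarith+
      then have "ln (real (nat \<lfloor>y\<rfloor>)) \<le> ln y" using elim by (subst ln_le_cancel_iff) auto
      moreover have "ln y > 0" using elim by simp
      ultimately show ?case by simp
    qed
    show "((\<lambda>y::real. ln (y - 1) / ln y) \<longlongrightarrow> 1) at_top" by real_asymp
  qed simp
  have "((\<lambda>y. prodf (nat \<lfloor>y\<rfloor>) / ln (real (nat \<lfloor>y\<rfloor>)) * (ln (real (nat \<lfloor>y\<rfloor>)) / ln y)) \<longlongrightarrow> exp euler_mascheroni) at_top"
    using tendsto_mult[OF a q] by simp
  moreover have "eventually (\<lambda>y. prodf (nat \<lfloor>y\<rfloor>) / ln (real (nat \<lfloor>y\<rfloor>)) * (ln (real (nat \<lfloor>y\<rfloor>)) / ln y) = prodf (nat \<lfloor>y\<rfloor>) / ln y) at_top"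
    using eventually_ge_at_top[of "3::real"]
  proof eventually_elim
    case (elim y)
    have "real (nat \<lfloor>y\<rfloor>) \<ge> 2" using elim by linarith
    then have "ln (real (nat \<lfloor>y\<rfloor>)) > 0" by (intro ln_gt_zero) linarith
    then show ?case by simp
  qed
  ultimately show ?thesis by (rule Lim_transform_eventually)
qed


lemma gen_div: "(a::real) > 0 \<Longrightarrow> Q * Pz = 1 \<Longrightarrow> a / (a * Pz) = Q"
proof -
  assume a: "a > 0" and q: "Q * Pz = 1"
  then have P: "Pz \<noteq> 0" by auto
  have "a / (a * Pz) = 1 / Pz" using a P by simp
  also have "1 / Pz = Q" using q P by (simp add: field_simps)
  finally show ?thesis .
qed

lemma ratio_formula:
  assumes "n > 0"
  shows "real n / real (totient n) = (\<Prod>p\<in>prime_factors n. real p / (real p - 1))"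
proof -
  have pf: "real p \<ge> 2" if "p \<in> prime_factors n" for p
    using that prime_ge_2_nat by (auto simp: prime_factors_multiplicity)
  have "(\<Prod>p\<in>prime_factors n. real p / (real p - 1)) * (\<Prod>p\<in>prime_factors n. 1 - 1 / real p)
        = (\<Prod>p\<in>prime_factors n. real p / (real p - 1) * (1 - 1 / real p))"
    by (rule prod.distrib[symmetric])
  also have "\<dots> = (\<Prod>p\<in>prime_factors n. 1)"
  proof (intro prod.cong refl)
    fix p assume "p \<in> prime_factors n"
    then have "real p \<ge> 2" by (rule pf)
    then show "real p / (real p - 1) * (1 - 1 / real p) = 1" by (simp add: field_simps)
  qed
  finally have e: "(\<Prod>p\<in>prime_factors n. real p / (real p - 1)) * (\<Prod>p\<in>prime_factors n. 1 - 1 / real p) = 1" by simp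
  have t: "real (totient n) = real n * (\<Prod>p\<in>prime_factors n. 1 - 1 / real p)" by (rule totient_formula2)
  show ?thesis unfolding t using assms e by (intro gen_div) auto
qed

lemma prod_pf_le:
  assumes "n > 0"
  shows "(\<Prod>p\<in>prime_factors n. real p) \<le> real n"
proof -
  have "(\<Prod>p\<in>prime_factors n. p) \<le> (\<Prod>p\<in>prime_factors n. p ^ multiplicity p n)"
  proof (intro prod_mono conjI)
    fix p assume p: "p \<in> prime_factors n"
    then have "multiplicity p n > 0" "p > 0" by (auto simp: prime_factors_multiplicity prime_gt_0_nat)
    then show "p \<le> p ^ multiplicity p n" by (simp add: self_le_power)
  qed auto
  also have "\<dots> = n" using assms by (intro prime_factorization_nat[symmetric]) auto
  finally have "(\<Prod>p\<in>prime_factors n. p) \<le> n" .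
  then have "real (\<Prod>p\<in>prime_factors n. p) \<le> real n" by (simp only: of_nat_le_iff)
  then show ?thesis by simp
qed

lemma upper_ratio:
  assumes y3: "ln (real n) \<ge> 3"
  shows "real n / real (totient n) \<le> prodf (nat \<lfloor>ln (real n)\<rfloor>) * exp (ln (real n) / ((ln (real n) - 1) * ln (ln (real n))))"
proof -
  define y where "y = ln (real n)"
  define Y where "Y = nat \<lfloor>y\<rfloor>"
  have y: "y \<ge> 3" unfolding y_def by (rule y3)
  have n0: "n > 0" using y3 by (cases n) auto
  have ny: "real n = exp y" unfolding y_def using n0 by simp
  define f where "f p = real p / (real p - 1)" for p :: nat
  define PF where "PF = prime_factors n"
  define Ap where "Ap = {p\<in>PF. real p \<le> y}"
  define Cp where "Cp = {p\<in>PF. real p > y}"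
  have pf2: "real p \<ge> 2" if "p \<in> PF" for p
    using that prime_ge_2_nat unfolding PF_def by (auto simp: prime_factors_multiplicity)
  have fin: "finite Ap" "finite Cp" unfolding Ap_def Cp_def PF_def by auto
  have "real n / real (totient n) = prod f PF" unfolding f_def PF_def using n0 by (rule ratio_formula)
  also have "PF = Ap \<union> Cp" unfolding Ap_def Cp_def by auto
  also have "prod f (Ap \<union> Cp) = prod f Ap * prod f Cp"
    using fin by (rule prod.union_disjoint) (auto simp: Ap_def Cp_def)
  finally have split: "real n / real (totient n) = prod f Ap * prod f Cp" .
  have A: "prod f Ap \<le> prodf Y" unfolding prodf_def f_def[symmetric]
  proof (rule prod_mono2)
    show "finite {p. prime p \<and> p \<le> Y}" by auto
    show "Ap \<subseteq> {p. prime p \<and> p \<le> Y}"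
    proof
      fix p assume p: "p \<in> Ap"
      then have "prime p" unfolding Ap_def PF_def by (auto simp: prime_factors_multiplicity)
      moreover have "p \<le> Y" using p unfolding Ap_def Y_def by (auto intro: le_nat_floor)
      ultimately show "p \<in> {p. prime p \<and> p \<le> Y}" by simp
    qed
    fix p assume "p \<in> {p. prime p \<and> p \<le> Y} - Ap"
    then have "real p \<ge> 2" using prime_ge_2_nat by auto
    then show "1 \<le> f p" unfolding f_def by simp
  next
    fix p assume "p \<in> Ap"
    then have "real p \<ge> 2" using pf2 unfolding Ap_def by auto
    then show "0 \<le> f p" unfolding f_def by simp
  qed
  have C1: "prod f Cp \<le> (1 + 1 / (y - 1)) ^ card Cp"
  proof -
    have "prod f Cp \<le> (\<Prod>p\<in>Cp. 1 + 1 / (y - 1))"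
    proof (intro prod_mono conjI)
      fix p assume p: "p \<in> Cp"
      then have p2: "real p \<ge> 2" "real p > y" using pf2 unfolding Cp_def by auto
      show "0 \<le> f p" unfolding f_def using p2 by simp
      have "f p = 1 + 1 / (real p - 1)" unfolding f_def using p2 by (simp add: field_simps)
      also have "1 / (real p - 1) \<le> 1 / (y - 1)" using p2 y by (intro divide_left_mono) auto
      finally show "f p \<le> 1 + 1 / (y - 1)" by simp
    qed
    then show ?thesis by simp
  qed
  have C2: "real (card Cp) * ln y \<le> y"
  proof -
    have "y ^ card Cp = (\<Prod>p\<in>Cp. y)" by simp
    also have "\<dots> \<le> (\<Prod>p\<in>Cp. real p)"
      using y by (intro prod_mono) (auto simp: Cp_def)
    also have "\<dots> \<le> (\<Prod>p\<in>PF. real p)"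
    proof (intro prod_mono2)
      show "finite PF" unfolding PF_def by simp
      show "Cp \<subseteq> PF" unfolding Cp_def by auto
      fix p assume "p \<in> PF - Cp" then show "1 \<le> real p" using pf2 by force
    next
      fix p assume "p \<in> Cp" then show "0 \<le> real p" by simp
    qed
    also have "\<dots> \<le> real n" unfolding PF_def using n0 by (rule prod_pf_le)
    finally have "y ^ card Cp \<le> exp y" unfolding ny .
    then have "ln (y ^ card Cp) \<le> ln (exp y)" using y by (subst ln_le_cancel_iff) auto
    then show ?thesis using y by (simp add: ln_realpow)
  qed
  have "(1 + 1 / (y - 1)) ^ card Cp \<le> exp (1 / (y - 1)) ^ card Cp"
    using y by (intro power_mono) (auto simp: exp_ge_add_one_self add.commute)
  also have "\<dots> = exp (real (card Cp) * (1 / (y - 1)))" by (simp only: exp_of_nat_mult)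
  also have "\<dots> \<le> exp (y / ((y - 1) * ln y))"
  proof -
    have ly: "ln y > 0" using y by simp
    have "real (card Cp) \<le> y / ln y" using C2 ly by (simp add: field_simps)
    then have "real (card Cp) * (1 / (y - 1)) \<le> (y / ln y) * (1 / (y - 1))"
      using y by (intro mult_right_mono) auto
    also have "\<dots> = y / ((y - 1) * ln y)" by (simp add: field_simps)
    finally show ?thesis by simp
  qed
  finally have C: "prod f Cp \<le> exp (y / ((y - 1) * ln y))" using C1 by linarith
  have "prod f Ap * prod f Cp \<le> prodf Y * exp (y / ((y - 1) * ln y))"
  proof (intro mult_mono A C)
    show "0 \<le> prodf Y" using prodf_pos[of Y] by simp
    show "0 \<le> prod f Cp" using pf2 unfolding f_def Cp_def by (intro prod_nonneg) force
  qed
  then show ?thesis using split unfolding y_def Y_def by simp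
qed

lemma ln_real_tendsto: "filterlim (\<lambda>n. ln (real n)) at_top sequentially"
  by real_asymp

lemma upper_eventually:
  assumes e: "\<epsilon> > 0"
  shows "eventually (\<lambda>n. real n / real (totient n) \<le> (exp euler_mascheroni + \<epsilon>) * ln (ln (real n))) sequentially"
proof -
  have g: "((\<lambda>y. prodf (nat \<lfloor>y\<rfloor>) / ln y * exp (y / ((y - 1) * ln y))) \<longlongrightarrow> exp euler_mascheroni * exp 0) at_top"
  proof (intro tendsto_mult mertens3_real tendsto_exp)
    show "((\<lambda>y::real. y / ((y - 1) * ln y)) \<longlongrightarrow> 0) at_top" by real_asymp
  qed
  then have "eventually (\<lambda>y. prodf (nat \<lfloor>y\<rfloor>) / ln y * exp (y / ((y - 1) * ln y)) < exp euler_mascheroni + \<epsilon>) at_top"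
    using e by (intro order_tendstoD) auto
  then have ev1: "eventually (\<lambda>y. prodf (nat \<lfloor>y\<rfloor>) / ln y * exp (y / ((y - 1) * ln y)) < exp euler_mascheroni + \<epsilon> \<and> y \<ge> 3) at_top"
    using eventually_ge_at_top[of "3::real"] by eventually_elim auto
  have "eventually (\<lambda>n. prodf (nat \<lfloor>ln (real n)\<rfloor>) / ln (ln (real n)) * exp (ln (real n) / ((ln (real n) - 1) * ln (ln (real n)))) < exp euler_mascheroni + \<epsilon> \<and> ln (real n) \<ge> 3) sequentially"
    using filterlim_iff[THEN iffD1, OF ln_real_tendsto, rule_format, OF ev1] by simp
  then show ?thesis
  proof eventually_elim
    case (elim n)
    have l: "ln (ln (real n)) > 0" using elim by simp
    have "real n / real (totient n) \<le> prodf (nat \<lfloor>ln (real n)\<rfloor>) * exp (ln (real n) / ((ln (real n) - 1) * ln (ln (real n))))"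
      using elim by (intro upper_ratio) auto
    also have "\<dots> = (prodf (nat \<lfloor>ln (real n)\<rfloor>) / ln (ln (real n)) * exp (ln (real n) / ((ln (real n) - 1) * ln (ln (real n))))) * ln (ln (real n))"
      using l by simp
    also have "\<dots> \<le> (exp euler_mascheroni + \<epsilon>) * ln (ln (real n))"
      using elim l by (intro mult_right_mono) auto
    finally show ?case .
  qed
qed



definition primorial :: "nat \<Rightarrow> nat" where "primorial Y = (\<Prod>p\<in>{p. prime p \<and> p \<le> Y}. p)"

lemma primorial_pos: "primorial Y > 0"
  unfolding primorial_def by (intro prod_pos) (auto dest: prime_gt_0_nat)

lemma primorial_le: "real (primorial Y) \<le> real Y ^ Y"
proof -
  let ?S = "{p. prime p \<and> p \<le> Y}"
  have "primorial Y \<le> (\<Prod>p\<in>?S. Y)" unfolding primorial_def by (intro prod_mono) auto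
  also have "\<dots> = Y ^ card ?S" by simp
  also have "\<dots> \<le> Y ^ Y"
  proof (cases "Y = 0")
    case True
    then have "?S = {}" by (auto dest: prime_gt_0_nat)
    then have c: "card ?S = 0" by simp
    show ?thesis by (simp only: c) (simp add: True)
  next
    case False
    have "?S \<subseteq> {1..Y}" by (auto dest: prime_gt_0_nat)
    then have "card ?S \<le> card {1..Y}" by (intro card_mono) auto
    then have "card ?S \<le> Y" by simp
    then show ?thesis using False by (intro power_increasing) auto
  qed
  finally have "primorial Y \<le> Y ^ Y" .
  then have "real (primorial Y) \<le> real (Y ^ Y)" by (simp only: of_nat_le_iff)
  then show ?thesis by simp
qed

lemma ratio_primorial: "real (primorial Y) / real (totient (primorial Y)) \<ge> prodf Y"
proof -
  let ?N = "primorial Y"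
  have N0: "?N > 0" by (rule primorial_pos)
  have "prodf Y \<le> (\<Prod>p\<in>prime_factors ?N. real p / (real p - 1))" unfolding prodf_def
  proof (rule prod_mono2)
    show "finite (prime_factors ?N)" by simp
    show "{p. prime p \<and> p \<le> Y} \<subseteq> prime_factors ?N"
    proof
      fix p assume p: "p \<in> {p. prime p \<and> p \<le> Y}"
      then have "p dvd ?N" unfolding primorial_def by (intro dvd_prodI) auto
      then show "p \<in> prime_factors ?N" using p N0 by (auto simp: in_prime_factors_iff)
    qed
    fix p assume "p \<in> prime_factors ?N - {p. prime p \<and> p \<le> Y}"
    then have "real p \<ge> 2" using prime_ge_2_nat by (auto simp: in_prime_factors_iff)
    then show "1 \<le> real p / (real p - 1)" by simp
  next
    fix p assume "p \<in> {p. prime p \<and> p \<le> Y}"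
    then have "real p \<ge> 2" using prime_ge_2_nat by auto
    then show "0 \<le> real p / (real p - 1)" by simp
  qed
  also have "\<dots> = real ?N / real (totient ?N)" using N0 by (rule ratio_formula[symmetric])
  finally show ?thesis .
qed

lemma totient_mult_le:
  assumes "k > 0" "N > 0"
  shows "real (totient (k * N)) \<le> real k * real (totient N)"
proof -
  let ?g = "\<lambda>p. 1 - 1 / real p"
  have g01: "0 \<le> ?g p \<and> ?g p \<le> 1" if "p \<in> prime_factors (k * N)" for p
  proof -
    have "real p \<ge> 2" using that prime_ge_2_nat by (auto simp: in_prime_factors_iff)
    then show ?thesis by simp
  qed
  have sub: "prime_factors N \<subseteq> prime_factors (k * N)" using assms by (auto simp: in_prime_factors_iff)
  have "prod ?g (prime_factors (k * N)) = prod ?g (prime_factors (k * N) - prime_factors N) * prod ?g (prime_factors N)"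
    using sub by (intro prod.subset_diff) auto
  also have "\<dots> \<le> 1 * prod ?g (prime_factors N)"
  proof (intro mult_right_mono prod_le_1 prod_nonneg)
    fix p assume "p \<in> prime_factors (k * N) - prime_factors N"
    then show "0 \<le> ?g p \<and> ?g p \<le> 1" using g01 by auto
  next
    fix p assume "p \<in> prime_factors N"
    then show "0 \<le> ?g p" using g01 sub by auto
  qed
  finally have le: "prod ?g (prime_factors (k * N)) \<le> prod ?g (prime_factors N)" by simp
  have "real (totient (k * N)) = real k * real N * prod ?g (prime_factors (k * N))"
    by (subst totient_formula2) simp
  also have "\<dots> \<le> real k * real N * prod ?g (prime_factors N)"
    using le by (intro mult_left_mono) auto
  also have "\<dots> = real k * real (totient N)" using totient_formula2[of N] by simp
  finally show ?thesis .
qed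

lemma totient_large: "\<exists>M. \<forall>n\<ge>M. real (totient n) > x"
proof -
  define C :: real where "C = exp euler_mascheroni + 1"
  have C: "C > 0" unfolding C_def by (simp add: add_pos_pos)
  have ev1: "eventually (\<lambda>n. real n / real (totient n) \<le> C * ln (ln (real n))) sequentially"
    unfolding C_def by (rule upper_eventually) simp
  have ev2a: "eventually (\<lambda>n::nat. ln (ln (real n)) \<le> sqrt (real n)) sequentially"
    by real_asymp
  have ev2b: "eventually (\<lambda>n::nat. ln (ln (real n)) > 0) sequentially"
    by real_asymp
  have ev2: "eventually (\<lambda>n::nat. ln (ln (real n)) \<le> sqrt (real n) \<and> ln (ln (real n)) > 0) sequentially"
    using ev2a ev2b by eventually_elim auto
  have ev3: "eventually (\<lambda>n::nat. sqrt (real n) > C * x) sequentially"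
  proof -
    have "filterlim (\<lambda>n::nat. sqrt (real n)) at_top sequentially" by real_asymp
    then show ?thesis by (simp add: filterlim_at_top_dense)
  qed
  have "eventually (\<lambda>n. real (totient n) > x) sequentially"
    using ev1 ev2 ev3 eventually_ge_at_top[of "1::nat"]
  proof eventually_elim
    case (elim n)
    have n0: "real n > 0" using elim by simp
    have t0: "real (totient n) > 0" using elim by simp
    have "real n \<le> C * ln (ln (real n)) * real (totient n)" using elim(1) t0 by (simp add: field_simps)
    also have "\<dots> \<le> C * sqrt (real n) * real (totient n)"
      using elim C t0 by (intro mult_right_mono mult_left_mono) auto
    finally have a: "real n \<le> C * sqrt (real n) * real (totient n)" .
    have s: "sqrt (real n) > 0" using n0 by simp
    have a': "real n \<le> sqrt (real n) * (C * real (totient n))" using a by (simp add: algebra_simps)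
    have "sqrt (real n) = real n / sqrt (real n)" using n0 by (simp add: real_div_sqrt)
    also have "\<dots> \<le> (sqrt (real n) * (C * real (totient n))) / sqrt (real n)"
      using a' s by (intro divide_right_mono) auto
    also have "\<dots> = C * real (totient n)" using s by simp
    finally have "sqrt (real n) \<le> C * real (totient n)" .
    then have "C * x < C * real (totient n)" using elim(3) by linarith
    then show ?case using C by simp
  qed
  then show ?thesis by (simp add: eventually_sequentially)
qed

lemma mtp_props:
  assumes "x \<ge> 1"
  shows "max_totient_preimage x > 0" "real (totient (max_totient_preimage x)) \<le> x"
    "\<And>k. k > 0 \<Longrightarrow> real (totient k) \<le> x \<Longrightarrow> k \<le> max_totient_preimage x"
proof -
  obtain M where M: "\<forall>n\<ge>M. real (totient n) > x" using totient_large by blast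
  let ?P = "\<lambda>m. m > 0 \<and> real (totient m) \<le> x"
  have P1: "?P 1" using assms by simp
  have bnd: "\<And>y. ?P y \<Longrightarrow> y \<le> M" using M by (meson not_le less_imp_le_nat not_less)
  have "?P (Greatest ?P)" by (rule GreatestI_nat[of ?P 1 M]) (use P1 bnd in auto)
  then show "max_totient_preimage x > 0" "real (totient (max_totient_preimage x)) \<le> x"
    unfolding max_totient_preimage_def by auto
  fix k assume "k > 0" "real (totient k) \<le> x"
  then have "?P k" by simp
  then show "k \<le> max_totient_preimage x" unfolding max_totient_preimage_def
    by (rule Greatest_le_nat[of ?P k M]) (use bnd in auto)
qed


lemma sqrt_exp_half: "x > 0 \<Longrightarrow> exp (ln x / 2) = sqrt x"
proof -
  assume x: "x > 0"
  have "sqrt x = x powr (1/2)" using x by (simp add: powr_half_sqrt)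
  also have "\<dots> = exp (ln x / 2)" using x by (simp add: powr_def)
  finally show ?thesis by simp
qed

lemma lower_bound_m:
  "eventually (\<lambda>x. real (max_totient_preimage x) \<ge> x * prodf (nat \<lfloor>ln x / (2 * ln (ln x))\<rfloor>) - sqrt x) at_top"
proof -
  have c1: "eventually (\<lambda>x::real. x \<ge> 1) at_top" by (rule eventually_ge_at_top)
  have c2: "eventually (\<lambda>x::real. ln (ln x) > 0) at_top" by real_asymp
  have c3: "eventually (\<lambda>x::real. ln x / (2 * ln (ln x)) \<ge> 2) at_top" by real_asymp
  have c4: "eventually (\<lambda>x::real. ln x / (2 * ln (ln x)) \<le> ln x) at_top" by real_asymp
  have c5: "eventually (\<lambda>x::real. ln x > 0) at_top" by real_asymp
  show ?thesis using c1 c2 c3 c4 c5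
  proof eventually_elim
    case (elim x)
    define y where "y = ln x / (2 * ln (ln x))"
    define Y where "Y = nat \<lfloor>y\<rfloor>"
    define N where "N = primorial Y"
    have x0: "x > 0" "ln x > 0" using elim by auto
    have y: "y \<ge> 2" "y \<le> ln x" using elim unfolding y_def by auto
    have Y: "real Y \<le> y" "real Y \<ge> 1" unfolding Y_def using y by linarith+
    have N0: "N > 0" unfolding N_def by (rule primorial_pos)
    have "ln (real N) \<le> ln (real Y ^ Y)"
      using N0 Y primorial_le[of Y] unfolding N_def by (subst ln_le_cancel_iff) auto
    also have "\<dots> = real Y * ln (real Y)" using Y by (simp add: ln_realpow)
    also have "\<dots> \<le> y * ln y"
      using Y y by (intro mult_mono) auto
    also have "\<dots> \<le> y * ln (ln x)" using y by (intro mult_left_mono) auto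
    also have "\<dots> = ln x / 2" unfolding y_def using elim by (simp add: field_simps)
    finally have "ln (real N) \<le> ln x / 2" .
    then have "exp (ln (real N)) \<le> exp (ln x / 2)" by simp
    then have Nx: "real N \<le> sqrt x" using N0 x0 by (simp add: sqrt_exp_half)
    have phi0: "real (totient N) > 0" using N0 by simp
    have phiN: "real (totient N) \<le> real N" by (simp add: totient_le)
    have sx1: "sqrt x \<ge> 1" using elim by simp
    have "x \<le> x^2" using elim by (simp add: power2_eq_square)
    then have "sqrt x \<le> sqrt (x^2)" by (rule real_sqrt_le_mono)
    then have sx: "sqrt x \<le> x" using x0 by simp
    define q where "q = x / real (totient N)"
    have q1: "q \<ge> 1" unfolding q_def using phi0 phiN Nx sx by (subst le_divide_eq_1_pos) auto
    define k where "k = nat \<lfloor>q\<rfloor>"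
    have k: "real k \<le> q" "real k \<ge> q - 1" "k > 0" unfolding k_def using q1 by linarith+
    have "real (totient (k * N)) \<le> real k * real (totient N)" using k N0 by (intro totient_mult_le) auto
    also have "\<dots> \<le> q * real (totient N)" using k phi0 by (intro mult_right_mono) auto
    also have "\<dots> = x" unfolding q_def using phi0 by simp
    finally have "real (totient (k * N)) \<le> x" .
    then have kN: "k * N \<le> max_totient_preimage x" using k N0 elim by (intro mtp_props(3)) auto
    have "x * prodf Y - sqrt x \<le> x * (real N / real (totient N)) - real N"
      using ratio_primorial[of Y] Nx x0 unfolding N_def by (intro diff_mono mult_left_mono) auto
    also have "\<dots> = (q - 1) * real N" unfolding q_def using phi0 by (simp add: field_simps)
    also have "\<dots> \<le> real k * real N" using k by (intro mult_right_mono) auto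
    also have "\<dots> = real (k * N)" by simp
    also have "\<dots> \<le> real (max_totient_preimage x)" using kN by (simp only: of_nat_le_iff)
    finally show ?case unfolding Y_def y_def .
  qed
qed

lemma lower_limit:
  "((\<lambda>x. (x * prodf (nat \<lfloor>ln x / (2 * ln (ln x))\<rfloor>) - sqrt x) / (x * ln (ln x))) \<longlongrightarrow> exp euler_mascheroni) at_top"
proof -
  define y where "y x = ln x / (2 * ln (ln x))" for x :: real
  have yt: "filterlim y at_top at_top" unfolding y_def by real_asymp
  have a: "((\<lambda>x. prodf (nat \<lfloor>y x\<rfloor>) / ln (y x)) \<longlongrightarrow> exp euler_mascheroni) at_top"
    using filterlim_compose[OF mertens3_real yt] by simp
  have b: "((\<lambda>x. ln (y x) / ln (ln x)) \<longlongrightarrow> 1) at_top" unfolding y_def by real_asymp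
  have c: "((\<lambda>x::real. sqrt x / (x * ln (ln x))) \<longlongrightarrow> 0) at_top" by real_asymp
  have "((\<lambda>x. prodf (nat \<lfloor>y x\<rfloor>) / ln (y x) * (ln (y x) / ln (ln x)) - sqrt x / (x * ln (ln x))) \<longlongrightarrow> exp euler_mascheroni * 1 - 0) at_top"
    by (intro tendsto_diff tendsto_mult a b c)
  moreover have "eventually (\<lambda>x. prodf (nat \<lfloor>y x\<rfloor>) / ln (y x) * (ln (y x) / ln (ln x)) - sqrt x / (x * ln (ln x))
      = (x * prodf (nat \<lfloor>ln x / (2 * ln (ln x))\<rfloor>) - sqrt x) / (x * ln (ln x))) at_top"
  proof -
    have e1: "eventually (\<lambda>x::real. ln (ln x) > 0) at_top" by real_asymp
    have e2: "eventually (\<lambda>x::real. ln (y x) > 0) at_top" unfolding y_def by real_asymp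
    show ?thesis using e1 e2 eventually_gt_at_top[of "0::real"]
    proof eventually_elim
      case (elim x)
      then show ?case unfolding y_def by (simp add: field_simps)
    qed
  qed
  ultimately show ?thesis using Lim_transform_eventually by fastforce
qed


lemma upper_bound_m:
  assumes e: "\<epsilon> > 0"
  shows "eventually (\<lambda>x. real (max_totient_preimage x) \<le> x * (exp euler_mascheroni + \<epsilon>) * (ln (ln x) + ln 3)) at_top"
proof -
  define C :: real where "C = exp euler_mascheroni + \<epsilon>"
  have C: "C > 0" unfolding C_def using e by (simp add: add_pos_pos)
  have ev1: "eventually (\<lambda>n. real n / real (totient n) \<le> C * ln (ln (real n))) sequentially"
    unfolding C_def using e by (rule upper_eventually)
  have ev2a: "eventually (\<lambda>n::nat. ln (ln (real n)) \<le> sqrt (real n)) sequentially" by real_asymp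
  have ev2b: "eventually (\<lambda>n::nat. ln (ln (real n)) > 0) sequentially" by real_asymp
  have ev2c: "eventually (\<lambda>n::nat. ln (real n) > 0) sequentially" by real_asymp
  have "eventually (\<lambda>n. real n / real (totient n) \<le> C * ln (ln (real n)) \<and> ln (ln (real n)) \<le> sqrt (real n) \<and> ln (ln (real n)) > 0 \<and> n \<ge> 1 \<and> ln (real n) > 0) sequentially"
    using ev1 ev2a ev2b ev2c eventually_ge_at_top[of "1::nat"] by eventually_elim auto
  then obtain n1 where n1: "\<And>n. n \<ge> n1 \<Longrightarrow> real n / real (totient n) \<le> C * ln (ln (real n)) \<and> ln (ln (real n)) \<le> sqrt (real n) \<and> ln (ln (real n)) > 0 \<and> n \<ge> 1 \<and> ln (real n) > 0"
    by (auto simp: eventually_sequentially)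
  have c1: "eventually (\<lambda>x::real. x \<ge> real n1 + 1) at_top" by (rule eventually_ge_at_top)
  have c2: "eventually (\<lambda>x::real. x \<ge> 1) at_top" by (rule eventually_ge_at_top)
  have c3: "eventually (\<lambda>x::real. ln x \<ge> 2 * ln C) at_top"
  proof -
    have "filterlim (\<lambda>x::real. ln x) at_top at_top" by real_asymp
    then show ?thesis by (simp add: filterlim_at_top)
  qed
  have c4: "eventually (\<lambda>x::real. ln (ln x) > 0) at_top" by real_asymp
  have c5: "eventually (\<lambda>x::real. ln x > 0) at_top" by real_asymp
  show ?thesis using c1 c2 c3 c4 c5
  proof eventually_elim
    case (elim x)
    define m where "m = max_totient_preimage x"
    have x0: "x > 0" "ln x > 0" using elim by auto
    have fl: "nat \<lfloor>x\<rfloor> > 0" "real (nat \<lfloor>x\<rfloor>) \<le> x" using elim by linarith+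
    have t1: "totient (nat \<lfloor>x\<rfloor>) \<le> nat \<lfloor>x\<rfloor>" by (rule totient_le)
    then have "real (totient (nat \<lfloor>x\<rfloor>)) \<le> real (nat \<lfloor>x\<rfloor>)" by (simp only: of_nat_le_iff)
    then have tfl: "real (totient (nat \<lfloor>x\<rfloor>)) \<le> x" using fl(2) by linarith
    have "nat \<lfloor>x\<rfloor> \<le> m" unfolding m_def by (rule mtp_props(3)[OF _ fl(1) tfl]) (use elim in auto)
    moreover have "n1 \<le> nat \<lfloor>x\<rfloor>" using elim by linarith
    ultimately have mn1: "m \<ge> n1" by simp
    note Q = n1[OF mn1]
    have m0: "m > 0" "real (totient m) \<le> x" unfolding m_def using elim mtp_props(1,2) by auto
    have t0: "real (totient m) > 0" using m0 by simp
    have d: "real m / real (totient m) \<le> C * ln (ln (real m))" using Q by simp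
    have "real m \<le> C * ln (ln (real m)) * real (totient m)" using d t0 by (simp add: pos_divide_le_eq)
    also have "\<dots> \<le> C * ln (ln (real m)) * x" using m0 Q C by (intro mult_left_mono) auto
    finally have mx: "real m \<le> C * ln (ln (real m)) * x" .
    also have "\<dots> \<le> C * sqrt (real m) * x" using Q C x0 by (intro mult_right_mono mult_left_mono) auto
    finally have a: "real m \<le> sqrt (real m) * (C * x)" by (simp add: algebra_simps)
    have s: "sqrt (real m) > 0" using m0 by simp
    have "sqrt (real m) = real m / sqrt (real m)" using m0 by (simp add: real_div_sqrt)
    also have "\<dots> \<le> (sqrt (real m) * (C * x)) / sqrt (real m)" using a s by (intro divide_right_mono) auto
    also have "\<dots> = C * x" using s by simp
    finally have "sqrt (real m) \<le> C * x" .
    then have "(sqrt (real m))^2 \<le> (C * x)^2" using s by (intro power_mono) auto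
    then have "real m \<le> (C * x)^2" using m0 by simp
    then have "ln (real m) \<le> ln ((C * x)^2)" using m0 C x0 by (subst ln_le_cancel_iff) auto
    also have "\<dots> = 2 * ln C + 2 * ln x" using C x0 by (simp add: ln_realpow ln_mult)
    also have "\<dots> \<le> 3 * ln x" using elim by linarith
    finally have lm: "ln (real m) \<le> 3 * ln x" .
    have "ln (ln (real m)) \<le> ln (3 * ln x)"
    proof -
      have "ln (real m) > 0" using Q by simp
      then show ?thesis using lm x0 by (subst ln_le_cancel_iff) auto
    qed
    also have "\<dots> = ln 3 + ln (ln x)" using x0 by (simp add: ln_mult)
    finally have llm: "ln (ln (real m)) \<le> ln (ln x) + ln 3" by simp
    have "real m \<le> C * ln (ln (real m)) * x" by (rule mx)
    also have "\<dots> \<le> C * (ln (ln x) + ln 3) * x" using llm C x0 by (intro mult_right_mono mult_left_mono) auto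
    finally show ?case unfolding m_def C_def by (simp add: algebra_simps)
  qed
qed

theorem lemma1:
  shows "((\<lambda>x. real (max_totient_preimage x) / (x * ln (ln x))) \<longlongrightarrow> exp euler_mascheroni) at_top"
proof (rule order_tendstoI)
  fix a :: real assume a: "a < exp euler_mascheroni"
  have "eventually (\<lambda>x. a < (x * prodf (nat \<lfloor>ln x / (2 * ln (ln x))\<rfloor>) - sqrt x) / (x * ln (ln x))) at_top"
    using lower_limit a by (rule order_tendstoD)
  moreover have "eventually (\<lambda>x::real. x * ln (ln x) > 0) at_top" by real_asymp
  ultimately show "eventually (\<lambda>x. a < real (max_totient_preimage x) / (x * ln (ln x))) at_top"
    using lower_bound_m
  proof eventually_elim
    case (elim x)
    have "(x * prodf (nat \<lfloor>ln x / (2 * ln (ln x))\<rfloor>) - sqrt x) / (x * ln (ln x)) \<le> real (max_totient_preimage x) / (x * ln (ln x))"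
      using elim by (intro divide_right_mono) auto
    then show ?case using elim by linarith
  qed
next
  fix a :: real assume a: "a > exp euler_mascheroni"
  define \<epsilon> where "\<epsilon> = (a - exp euler_mascheroni) / 2"
  have e: "\<epsilon> > 0" unfolding \<epsilon>_def using a by simp
  have h: "((\<lambda>x::real. (exp euler_mascheroni + \<epsilon>) * ((ln (ln x) + ln 3) / ln (ln x))) \<longlongrightarrow> (exp euler_mascheroni + \<epsilon>) * 1) at_top"
  proof (intro tendsto_mult tendsto_const)
    show "((\<lambda>x::real. (ln (ln x) + ln 3) / ln (ln x)) \<longlongrightarrow> 1) at_top" by real_asymp
  qed
  have h1: "(a - exp euler_mascheroni) / 2 < a - exp euler_mascheroni" using a by simp
  have "exp euler_mascheroni + \<epsilon> < a" unfolding \<epsilon>_def using h1 by linarith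
  then have "(exp euler_mascheroni + \<epsilon>) * 1 < a" by simp
  then have "eventually (\<lambda>x. (exp euler_mascheroni + \<epsilon>) * ((ln (ln x) + ln 3) / ln (ln x)) < a) at_top"
    using h by (intro order_tendstoD) auto
  moreover have "eventually (\<lambda>x::real. x > 0 \<and> ln (ln x) > 0) at_top"
  proof -
    have "eventually (\<lambda>x::real. ln (ln x) > 0) at_top" by real_asymp
    then show ?thesis using eventually_gt_at_top[of "0::real"] by eventually_elim auto
  qed
  ultimately show "eventually (\<lambda>x. real (max_totient_preimage x) / (x * ln (ln x)) < a) at_top"
    using upper_bound_m[OF e]
  proof eventually_elim
    case (elim x)
    have p: "x * ln (ln x) > 0" using elim by simp
    have "real (max_totient_preimage x) / (x * ln (ln x)) \<le> x * (exp euler_mascheroni + \<epsilon>) * (ln (ln x) + ln 3) / (x * ln (ln x))"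
      using elim p by (intro divide_right_mono) auto
    also have "\<dots> = (exp euler_mascheroni + \<epsilon>) * ((ln (ln x) + ln 3) / ln (ln x))" using elim by (simp add: field_simps)
    finally show ?case using elim by linarith
  qed
qed


end
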